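(* Fix $c>0$, let $\Phi\in\Omega(n,\lfloor c2^n\rfloor)$ and let $Y_n$ be the number of iterations of PUR on $\Phi$. Then \[\lim_{k\to-\infty}\ \liminf_{n\to\infty}\ \Pr\big[Y_n>\lfloor\log_2 n\rfloor+k\ \big|\ \Phi\text{ is unsatisfiable}\big]=1,\] where $k$ ranges over the integers.
   Context: $\mathcal H_n$ is the set of pairs $(P,S)$ with $P\in\{\emptyset,\{1\},\dots,\{n\}\}$, $S\subseteq\{1,\dots,n\}$, $(P,S)\ne(\emptyset,\emptyset)$, representing the Horn clause $\bigvee_{i\in P}x_i\vee\bigvee_{j\in S}\neg x_j$ (so $|\mathcal H_n|\sim n2^n$; the paper writes this number as $(n+2)2^n-1$); $\Omega(n,m)$ is the distribution of the conjunction of $m$ clauses drawn independently, uniformly with repetition from $\mathcal H_n$. Algorithm PUR on a Horn formula $\Phi$: if $\Phi$ has no positive unit clause (single literal $x_i$), accept. Otherwise choose uniformly at random a positive unit clause $x_i$; if $\Phi$ contains the clause $\neg x_i$, reject; otherwise set $x_i=1$ (delete clauses containing $x_i$, delete $\neg x_i$ from the others) and recurse. PUR accepts iff $\Phi$ is satisfiable. The number of iterations is the number of variables set to $1$ before PUR halts. *)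

theory Defs
  imports "HOL-Probability.Probability"
begin

text \<open>A Horn clause (P,S): P = None (no positive literal) or Some i (positive literal x_i),
  S the set of indices of negated variables.\<close>
type_synonym clause = "nat option \<times> nat set"

definition horn_clauses :: "nat \<Rightarrow> clause set" where
  "horn_clauses n = {(P, S). (P = None \<or> (\<exists>i\<in>{1..n}. P = Some i)) \<and> S \<subseteq> {1..n}
                              \<and> (P, S) \<noteq> (None, {})}"

definition clause_sat :: "(nat \<Rightarrow> bool) \<Rightarrow> clause \<Rightarrow> bool" where
  "clause_sat a C = ((\<exists>i. fst C = Some i \<and> a i) \<or> (\<exists>j\<in>snd C. \<not> a j))"

definition satisfiable :: "clause list \<Rightarrow> bool" where
  "satisfiable \<Phi> = (\<exists>a. \<forall>C\<in>set \<Phi>. clause_sat a C)"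

text \<open>Omega(n,m): conjunction of m clauses drawn independently and uniformly with repetition
  from horn_clauses n, i.e. a uniformly random length-m list over horn_clauses n.\<close>
definition Omega :: "nat \<Rightarrow> nat \<Rightarrow> clause list pmf" where
  "Omega n m = pmf_of_set {xs. length xs = m \<and> set xs \<subseteq> horn_clauses n}"

text \<open>Formulas as (finite) sets of clauses for the algorithm.\<close>
definition vars :: "clause set \<Rightarrow> nat set" where
  "vars F = (\<Union>(P, S)\<in>F. set_option P \<union> S)"

definition pos_units :: "clause set \<Rightarrow> nat set" where
  "pos_units F = {i. (Some i, {}) \<in> F}"

definition set_true :: "nat \<Rightarrow> clause set \<Rightarrow> clause set" where
  "set_true i F = (\<lambda>(P, S). (P, S - {i})) ` {C \<in> F. fst C \<noteq> Some i}"

text \<open>One run of PUR, returning (accepted?, number of iterations). The natural-number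
  argument is fuel; PUR below supplies more fuel than the number of variables, and every
  iteration eliminates one variable, so the fuel is never exhausted.\<close>
primrec pur_fuel :: "nat \<Rightarrow> clause set \<Rightarrow> (bool \<times> nat) pmf" where
  "pur_fuel 0 F = return_pmf (True, 0)"
| "pur_fuel (Suc k) F =
     (if pos_units F = {} then return_pmf (True, 0)
      else bind_pmf (pmf_of_set (pos_units F)) (\<lambda>i.
             if (None, {i}) \<in> F then return_pmf (False, 0)
             else map_pmf (\<lambda>(b, t). (b, Suc t)) (pur_fuel k (set_true i F))))"

definition PUR :: "clause set \<Rightarrow> (bool \<times> nat) pmf" where
  "PUR F = pur_fuel (Suc (card (vars F))) F"

definition PUR_on_Omega :: "nat \<Rightarrow> nat \<Rightarrow> (clause list \<times> (bool \<times> nat)) pmf" where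
  "PUR_on_Omega n m = bind_pmf (Omega n m) (\<lambda>\<Phi>. map_pmf (\<lambda>r. (\<Phi>, r)) (PUR (set \<Phi>)))"

definition cond_prob_iter :: "real \<Rightarrow> nat \<Rightarrow> int \<Rightarrow> real" where
  "cond_prob_iter c n k =
     (let D = PUR_on_Omega n (nat \<lfloor>c * 2 ^ n\<rfloor>) in
        measure_pmf.prob D {(\<Phi>, b, y). \<not> satisfiable \<Phi> \<and> int y > \<lfloor>log 2 (real n)\<rfloor> + k}
        / measure_pmf.prob D {(\<Phi>, r). \<not> satisfiable \<Phi>})"

end

theory Submission
  imports Defs "HOL-Real_Asymp.Real_Asymp" "HOL-Library.Discrete_Functions"
begin


definition defs :: "clause set \<Rightarrow> clause set" where
  "defs F = {C\<in>F. fst C \<noteq> None}"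

primrec seq_fuel :: "nat \<Rightarrow> clause set \<Rightarrow> nat list pmf" where
  "seq_fuel 0 F = return_pmf []"
| "seq_fuel (Suc k) F =
     (if pos_units F = {} then return_pmf []
      else bind_pmf (pmf_of_set (pos_units F)) (\<lambda>i. map_pmf (Cons i) (seq_fuel k (set_true i F))))"

lemma finite_pos_units: "finite F \<Longrightarrow> finite (pos_units F)"
  unfolding pos_units_def
  by (rule finite_subset[of _ "(\<lambda>C. the (fst C)) ` F"]) force+

lemma finite_set_true: "finite F \<Longrightarrow> finite (set_true i F)"
  by (simp add: set_true_def)

lemma snd_finite_set_true: "\<forall>C\<in>F. finite (snd C) \<Longrightarrow> \<forall>C\<in>set_true i F. finite (snd C)"
  by (auto simp: set_true_def)

lemma vars_set_true: "vars (set_true i F) \<subseteq> vars F - {i}"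
  unfolding vars_def set_true_def by force

lemma pos_units_vars: "pos_units F \<subseteq> vars F"
  unfolding vars_def pos_units_def by force

lemma finite_vars: "finite F \<Longrightarrow> \<forall>C\<in>F. finite (snd C) \<Longrightarrow> finite (vars F)"
  unfolding vars_def by auto

lemma card_vars_set_true:
  assumes "finite F" "\<forall>C\<in>F. finite (snd C)" "i \<in> pos_units F"
  shows "card (vars (set_true i F)) < card (vars F)"
proof -
  have "i \<in> vars F" using assms(3) pos_units_vars by auto
  have fin: "finite (vars F)" using finite_vars assms by auto
  have "card (vars (set_true i F)) \<le> card (vars F - {i})"
    by (rule card_mono) (use fin vars_set_true in auto)
  also have "\<dots> < card (vars F)" using fin \<open>i \<in> vars F\<close>
    by (metis card_Diff1_less)
  finally show ?thesis .
qed

lemma pur_sound: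
  "finite F \<Longrightarrow> \<forall>C\<in>F. finite (snd C) \<Longrightarrow> (None,{}) \<notin> F \<Longrightarrow> card (vars F) < k \<Longrightarrow>
   (True,y) \<in> set_pmf (pur_fuel k F) \<Longrightarrow> \<exists>a. \<forall>C\<in>F. clause_sat a C"
proof (induction k arbitrary: F y)
  case 0
  then show ?case by simp
next
  case (Suc k)
  show ?case
  proof (cases "pos_units F = {}")
    case True
    have "clause_sat (\<lambda>_. False) C" if CF: "C \<in> F" for C
    proof (cases C)
      case (Pair P S)
      show ?thesis
      proof (cases "S = {}")
        case True
        then obtain i where "P = Some i" using Pair CF Suc.prems(3) True by (cases P) auto
        then have "i \<in> pos_units F" using Pair True CF by (simp add: pos_units_def)
        then show ?thesis using \<open>pos_units F = {}\<close> by simp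
      next
        case False
        then show ?thesis using Pair by (auto simp: clause_sat_def)
      qed
    qed
    then show ?thesis by blast
  next
    case False
    have fin: "finite (pos_units F)" using finite_pos_units Suc.prems by auto
    from Suc.prems(5) False fin obtain i where i: "i \<in> pos_units F"
      and yi: "(True, y) \<in> set_pmf (if (None, {i}) \<in> F then return_pmf (False, 0)
             else map_pmf (\<lambda>(b, t). (b, Suc t)) (pur_fuel k (set_true i F)))"
      by auto
    have ni: "(None, {i}) \<notin> F" using yi by (auto split: if_splits)
    with yi obtain t where t: "(True, t) \<in> set_pmf (pur_fuel k (set_true i F))"
      by auto
    have ne: "(None, {}) \<notin> set_true i F"
    proof
      assume "(None, {}) \<in> set_true i F"
      then obtain P S where "(P,S) \<in> F" "P \<noteq> Some i" "(P, S - {i}) = (None, {})"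
        unfolding set_true_def by auto
      then have "P = None" "S \<subseteq> {i}" by auto
      then have "S = {} \<or> S = {i}" by auto
      then show False using \<open>(P,S) \<in> F\<close> \<open>P = None\<close> ni Suc.prems(3) by auto
    qed
    have "card (vars (set_true i F)) < k"
      using card_vars_set_true[OF Suc.prems(1,2) i] Suc.prems(4) by simp
    then obtain a where a: "\<forall>C\<in>set_true i F. clause_sat a C"
      using Suc.IH[OF finite_set_true[OF Suc.prems(1)] snd_finite_set_true[OF Suc.prems(2)] ne _ t]
      by blast
    have "clause_sat (a(i := True)) C" if "C \<in> F" for C
    proof (cases C)
      case (Pair P S)
      show ?thesis
      proof (cases "P = Some i")
        case True
        then show ?thesis using Pair by (simp add: clause_sat_def)
      next
        case False
        then have "(P, S - {i}) \<in> set_true i F" using that Pair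
          unfolding set_true_def by force
        then have "clause_sat a (P, S - {i})" using a by blast
        then show ?thesis using Pair False by (auto simp: clause_sat_def)
      qed
    qed
    then show ?thesis by blast
  qed
qed

lemma prob_bind_pmf:
  "measure_pmf.prob (bind_pmf M f) A = measure_pmf.expectation M (\<lambda>x. measure_pmf.prob (f x) A)"
  unfolding measure_pmf_bind
  by (rule measure_pmf.measure_bind[where N="count_space UNIV"])
     (auto simp: measurable_pmf_measure1 space_subprob_algebra
       intro!: measurable_count_space_eq1[THEN iffD2] prob_space_imp_subprob_space measure_pmf.prob_space_axioms)

lemma prob_bind_pmf_of_set:
  assumes "finite S" "S \<noteq> {}"
  shows "measure_pmf.prob (bind_pmf (pmf_of_set S) f) A = (\<Sum>x\<in>S. measure_pmf.prob (f x) A) / card S"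
  using assms by (simp add: prob_bind_pmf integral_pmf_of_set)

lemma pur_couple:
  "finite F \<Longrightarrow> measure_pmf.prob (pur_fuel k F) {(b,y). \<not> b \<and> y \<le> t}
     \<le> measure_pmf.prob (seq_fuel k F) {s. \<exists>S. (None,S) \<in> F \<and> S \<subseteq> set (take (Suc t) s)}"
proof (induction k arbitrary: F t)
  case 0
  then show ?case by simp
next
  case (Suc k)
  show ?case
  proof (cases "pos_units F = {}")
    case True
    then show ?thesis by simp
  next
    case False
    have fin: "finite (pos_units F)" using finite_pos_units Suc.prems by auto
    let ?E = "{s. \<exists>S. (None,S) \<in> F \<and> S \<subseteq> set (take (Suc t) s)}"
    have le: "measure_pmf.prob (if (None, {i}) \<in> F then return_pmf (False, 0)
             else map_pmf (\<lambda>(b, t). (b, Suc t)) (pur_fuel k (set_true i F))) {(b,y). \<not> b \<and> y \<le> t}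
          \<le> measure_pmf.prob (map_pmf (Cons i) (seq_fuel k (set_true i F))) ?E" for i
    proof (cases "(None, {i}) \<in> F")
      case True
      have "Cons i -` ?E = UNIV" using True by auto
      then show ?thesis using True by simp
    next
      case ni: False
      show ?thesis
      proof (cases "t = 0")
        case True
        have "(\<lambda>(b, t). (b, Suc t)) -` {(b,y). \<not> b \<and> y \<le> t} = {}" using True by auto
        then show ?thesis using ni by simp
      next
        case False
        then obtain t' where tt: "t = Suc t'" by (cases t) auto
        have "measure_pmf.prob (map_pmf (\<lambda>(b, t). (b, Suc t)) (pur_fuel k (set_true i F))) {(b,y). \<not> b \<and> y \<le> t}
            = measure_pmf.prob (pur_fuel k (set_true i F)) {(b,y). \<not> b \<and> y \<le> t'}"
          using tt by (auto intro!: arg_cong[where f="measure_pmf.prob _"])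
        also have "\<dots> \<le> measure_pmf.prob (seq_fuel k (set_true i F))
             {s. \<exists>S. (None,S) \<in> set_true i F \<and> S \<subseteq> set (take (Suc t') s)}"
          using Suc.IH[OF finite_set_true[OF Suc.prems]] .
        also have "\<dots> \<le> measure_pmf.prob (seq_fuel k (set_true i F)) (Cons i -` ?E)"
        proof (rule measure_pmf.finite_measure_mono)
          show "{s. \<exists>S. (None,S) \<in> set_true i F \<and> S \<subseteq> set (take (Suc t') s)} \<subseteq> Cons i -` ?E"
          proof
            fix s assume "s \<in> {s. \<exists>S. (None,S) \<in> set_true i F \<and> S \<subseteq> set (take (Suc t') s)}"
            then obtain S where "(None, S) \<in> set_true i F" "S \<subseteq> set (take (Suc t') s)" by blast
            then obtain S0 where "(None, S0) \<in> F" "S = S0 - {i}"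
              unfolding set_true_def by auto
            then show "s \<in> Cons i -` ?E" using \<open>S \<subseteq> _\<close> tt by auto
          qed
        qed simp
        finally have X: "measure_pmf.prob (map_pmf (\<lambda>(b, t). (b, Suc t)) (pur_fuel k (set_true i F))) {(b,y). \<not> b \<and> y \<le> t} \<le> measure_pmf.prob (seq_fuel k (set_true i F)) (Cons i -` ?E)" .
        have Y: "measure_pmf.prob (map_pmf (Cons i) (seq_fuel k (set_true i F))) ?E = measure_pmf.prob (seq_fuel k (set_true i F)) (Cons i -` ?E)"
          by (rule measure_map_pmf)
        show ?thesis using X Y by (simp only: ni if_False)
      qed
    qed
    have "measure_pmf.prob (pur_fuel (Suc k) F) {(b,y). \<not> b \<and> y \<le> t}
       = (\<Sum>i\<in>pos_units F. measure_pmf.prob (if (None, {i}) \<in> F then return_pmf (False, 0)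
             else map_pmf (\<lambda>(b, t). (b, Suc t)) (pur_fuel k (set_true i F))) {(b,y). \<not> b \<and> y \<le> t}) / card (pos_units F)"
      using False fin by (simp add: prob_bind_pmf_of_set)
    also have "\<dots> \<le> (\<Sum>i\<in>pos_units F. measure_pmf.prob (map_pmf (Cons i) (seq_fuel k (set_true i F))) ?E) / card (pos_units F)"
      by (intro divide_right_mono sum_mono le) simp
    also have "\<dots> = measure_pmf.prob (seq_fuel (Suc k) F) ?E"
      using False fin by (simp add: prob_bind_pmf_of_set del: measure_map_pmf)
    finally show ?thesis .
  qed
qed

lemma pos_units_defs: "pos_units (defs F) = pos_units F"
  by (auto simp: pos_units_def defs_def)

lemma set_true_defs: "set_true i (defs F) = defs (set_true i F)"
  unfolding set_true_def defs_def by force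

lemma seq_defs: "seq_fuel k F = seq_fuel k (defs F)"
  by (induction k arbitrary: F) (simp_all add: pos_units_defs set_true_defs)

lemma seq_fuel_Suc:
  "finite F \<Longrightarrow> \<forall>C\<in>F. finite (snd C) \<Longrightarrow> card (vars F) < k \<Longrightarrow> seq_fuel (Suc k) F = seq_fuel k F"
proof (induction k arbitrary: F)
  case 0
  then show ?case by simp
next
  case (Suc k)
  have IH: "seq_fuel (Suc k) (set_true i F) = seq_fuel k (set_true i F)" if "i \<in> pos_units F" for i
    using Suc.IH[OF finite_set_true[OF Suc.prems(1)] snd_finite_set_true[OF Suc.prems(2)]]
      card_vars_set_true[OF Suc.prems(1,2) that] Suc.prems(3) by simp
  have "seq_fuel (Suc (Suc k)) F = (if pos_units F = {} then return_pmf [] else bind_pmf (pmf_of_set (pos_units F)) (\<lambda>i. map_pmf (Cons i) (seq_fuel (Suc k) (set_true i F))))"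
    by (rule seq_fuel.simps(2))
  also have "\<dots> = (if pos_units F = {} then return_pmf [] else bind_pmf (pmf_of_set (pos_units F)) (\<lambda>i. map_pmf (Cons i) (seq_fuel k (set_true i F))))"
  proof (cases "pos_units F = {}")
    case False
    then show ?thesis
      using IH finite_pos_units[OF Suc.prems(1)] by (intro if_cong refl bind_pmf_cong) (auto simp del: seq_fuel.simps)
  qed simp
  also have "\<dots> = seq_fuel (Suc k) F" by (rule seq_fuel.simps(2)[symmetric])
  finally show ?case .
qed

lemma seq_fuel_add:
  "finite F \<Longrightarrow> \<forall>C\<in>F. finite (snd C) \<Longrightarrow> card (vars F) < k \<Longrightarrow> seq_fuel (k + d) F = seq_fuel k F"
proof (induction d)
  case (Suc d)
  then show ?case using seq_fuel_Suc[of F "k+d"] by (simp del: seq_fuel.simps)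
qed simp

definition SEQ :: "clause set \<Rightarrow> nat list pmf" where
  "SEQ F = seq_fuel (Suc (card (vars F))) F"

lemma seq_fuel_SEQ:
  assumes "finite F" "\<forall>C\<in>F. finite (snd C)" "card (vars F) < k"
  shows "seq_fuel k F = SEQ F"
proof -
  have "seq_fuel (Suc (card (vars F)) + (k - Suc (card (vars F)))) F = SEQ F"
    unfolding SEQ_def by (rule seq_fuel_add) (use assms in auto)
  then show ?thesis using assms(3) by simp
qed

lemma horn_eq: "horn_clauses n = (insert None (Some ` {1..n})) \<times> Pow {1..n} - {(None,{})}"
  unfolding horn_clauses_def by auto

lemma finite_horn: "finite (horn_clauses n)"
  unfolding horn_eq by auto

lemma card_horn: "card (horn_clauses n) = (n+1) * 2^n - 1"
proof -
  have "card (insert None (Some ` {1..n}) \<times> Pow {1..n}) = (n+1) * 2^n"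
    by (simp add: card_cartesian_product card_image card_Pow)
  then show ?thesis unfolding horn_eq
    by (subst card_Diff_singleton) auto
qed


lemma horn_nonempty: "(None, {}) \<notin> horn_clauses n"
  unfolding horn_clauses_def by auto

lemma horn_snd_sub: "C \<in> horn_clauses n \<Longrightarrow> snd C \<subseteq> {1..n}"
  unfolding horn_clauses_def by auto

lemma horn_snd_finite: "C \<in> horn_clauses n \<Longrightarrow> finite (snd C)"
  by (meson finite_atLeastAtMost finite_subset horn_snd_sub)

lemma vars_mono: "F \<subseteq> G \<Longrightarrow> vars F \<subseteq> vars G"
  unfolding vars_def by auto

lemma PUR_couple:
  assumes "set \<Phi> \<subseteq> horn_clauses n"
  shows "measure_pmf.prob (PUR (set \<Phi>)) {(b,y). \<not> b \<and> y \<le> t}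
     \<le> measure_pmf.prob (SEQ (defs (set \<Phi>))) {s. \<exists>S. (None,S) \<in> set \<Phi> \<and> S \<subseteq> set (take (Suc t) s)}"
proof -
  let ?F = "set \<Phi>"
  have sf: "\<forall>C\<in>?F. finite (snd C)" using assms horn_snd_finite by auto
  have sfd: "\<forall>C\<in>defs ?F. finite (snd C)" using sf by (auto simp: defs_def)
  have fd: "finite (defs ?F)" by (simp add: defs_def)
  have "card (vars (defs ?F)) \<le> card (vars ?F)"
    by (rule card_mono) (use finite_vars sf vars_mono in \<open>auto simp: defs_def\<close>)
  then have "seq_fuel (Suc (card (vars ?F))) (defs ?F) = SEQ (defs ?F)"
    by (intro seq_fuel_SEQ fd sfd) simp
  then show ?thesis
    using pur_couple[of ?F "Suc (card (vars ?F))" t] seq_defs[of "Suc (card (vars ?F))" ?F]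
    by (simp add: PUR_def)
qed

lemma union_bound_neg:
  "measure_pmf.prob M {s. \<exists>S. (None,S) \<in> set \<Phi> \<and> S \<subseteq> X s}
   \<le> (\<Sum>p<length \<Phi>. if fst (\<Phi>!p) = None then measure_pmf.prob M {s. snd (\<Phi>!p) \<subseteq> X s} else 0)"
proof -
  let ?I = "{p\<in>{..<length \<Phi>}. fst (\<Phi>!p) = None}"
  have "{s. \<exists>S. (None,S) \<in> set \<Phi> \<and> S \<subseteq> X s} \<subseteq> (\<Union>p\<in>?I. {s. snd (\<Phi>!p) \<subseteq> X s})"
  proof
    fix s assume "s \<in> {s. \<exists>S. (None,S) \<in> set \<Phi> \<and> S \<subseteq> X s}"
    then obtain S where "(None,S) \<in> set \<Phi>" "S \<subseteq> X s" by blast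
    then obtain p where "p < length \<Phi>" "\<Phi>!p = (None,S)" by (metis in_set_conv_nth)
    then show "s \<in> (\<Union>p\<in>?I. {s. snd (\<Phi>!p) \<subseteq> X s})" using \<open>S \<subseteq> X s\<close> by force
  qed
  then have "measure_pmf.prob M {s. \<exists>S. (None,S) \<in> set \<Phi> \<and> S \<subseteq> X s}
      \<le> measure_pmf.prob M (\<Union>p\<in>?I. {s. snd (\<Phi>!p) \<subseteq> X s})"
    by (rule measure_pmf.finite_measure_mono) simp
  also have "\<dots> \<le> (\<Sum>p\<in>?I. measure_pmf.prob M {s. snd (\<Phi>!p) \<subseteq> X s})"
    by (rule measure_pmf.finite_measure_subadditive_finite) auto
  also have "\<dots> = (\<Sum>p<length \<Phi>. if fst (\<Phi>!p) = None then measure_pmf.prob M {s. snd (\<Phi>!p) \<subseteq> X s} else 0)"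
    by (rule sum.inter_filter) simp
  finally show ?thesis .
qed

lemma sum_prob_subsets:
  assumes "finite U" "\<And>s. finite (X s)" "\<And>s. card (X s) \<le> r"
  shows "(\<Sum>S\<in>Pow U. measure_pmf.prob M {s. S \<subseteq> X s}) \<le> 2^r"
proof -
  have "(\<Sum>S\<in>Pow U. measure_pmf.prob M {s. S \<subseteq> X s})
      = (\<Sum>S\<in>Pow U. measure_pmf.expectation M (indicator {s. S \<subseteq> X s}))"
    by (intro sum.cong refl) (simp add: integral_indicator measure_pmf.emeasure_eq_measure)
  also have "\<dots> = measure_pmf.expectation M (\<lambda>s. \<Sum>S\<in>Pow U. indicator {s. S \<subseteq> X s} s)"
    by (rule Bochner_Integration.integral_sum[where I="Pow U" and f="\<lambda>S. indicator {s. S \<subseteq> X s} :: _ \<Rightarrow> real", symmetric])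
       (auto intro!: measure_pmf.integrable_const_bound[where B=1])
  also have "\<dots> \<le> measure_pmf.expectation M (\<lambda>s. 2^r)"
  proof (rule integral_mono)
    show "integrable (measure_pmf M) (\<lambda>s. \<Sum>S\<in>Pow U. indicator {s. S \<subseteq> X s} s :: real)"
      by (rule Bochner_Integration.integrable_sum) (auto intro!: measure_pmf.integrable_const_bound[where B=1])
    fix s
    have A: "(\<Sum>S\<in>Pow U. indicator {s. S \<subseteq> X s} s :: real) = real (card (Pow (U \<inter> X s)))"
      using assms(1) by (simp add: indicator_def sum.If_cases[of "Pow U"] Int_def Pow_def) (intro arg_cong[where f=card], blast)
    have B: "real (card (Pow (U \<inter> X s))) = 2 ^ card (U \<inter> X s)"
      using assms(1) by (simp add: card_Pow del: Pow_Int_eq)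
    have "card (U \<inter> X s) \<le> r"
      using card_mono[OF assms(2)[of s], of "U \<inter> X s"] assms(3)[of s] by auto
    then have "(2::real) ^ card (U \<inter> X s) \<le> 2^r" by (intro power_increasing) auto
    then show "(\<Sum>S\<in>Pow U. indicator {s. S \<subseteq> X s} s :: real) \<le> 2^r" using A B by linarith
  qed simp
  also have "\<dots> = 2^r" by simp
  finally show ?thesis .
qed

definition LL :: "'a set \<Rightarrow> nat \<Rightarrow> 'a list set" where
  "LL H m = {xs. set xs \<subseteq> H \<and> length xs = m}"

lemma finite_LL: "finite H \<Longrightarrow> finite (LL H m)"
  unfolding LL_def by (rule finite_lists_length_eq)

lemma card_LL: "finite H \<Longrightarrow> card (LL H m) = card H ^ m"
  unfolding LL_def by (rule card_lists_length_eq)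

lemma sum_pos_swap:
  assumes "p < m" "C \<in> H" "C' \<in> H"
  shows "(\<Sum>\<Phi>\<in>{\<Phi>\<in>LL H m. \<Phi>!p = C}. f (\<Phi>[p:=C'])) = (\<Sum>\<Psi>\<in>{\<Psi>\<in>LL H m. \<Psi>!p = C'}. f \<Psi>)"
proof (rule sum.reindex_bij_witness[where i="\<lambda>\<Psi>. \<Psi>[p:=C]" and j="\<lambda>\<Phi>. \<Phi>[p:=C']"])
  fix \<Psi> assume "\<Psi> \<in> {\<Psi>\<in>LL H m. \<Psi>!p = C'}"
  then show "(\<Psi>[p := C])[p := C'] = \<Psi>" "\<Psi>[p := C] \<in> {\<Phi>\<in>LL H m. \<Phi>!p = C}"
    using assms set_update_subset_insert[of \<Psi> p C] by (auto simp: LL_def)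
next
  fix \<Phi> assume "\<Phi> \<in> {\<Phi>\<in>LL H m. \<Phi>!p = C}"
  then show "(\<Phi>[p := C'])[p := C] = \<Phi>" "\<Phi>[p := C'] \<in> {\<Psi>\<in>LL H m. \<Psi>!p = C'}"
      "f (\<Phi>[p := C']) = f (\<Phi>[p := C'])"
    using assms set_update_subset_insert[of \<Phi> p C'] by (auto simp: LL_def)
qed

lemma sum_group_pos:
  assumes "finite H" "p < m"
  shows "(\<Sum>\<Phi>\<in>LL H m. g \<Phi>) = (\<Sum>C\<in>H. \<Sum>\<Phi>\<in>{\<Phi>\<in>LL H m. \<Phi>!p = C}. g \<Phi>)"
  by (rule sum.group[symmetric]) (use assms finite_LL in \<open>auto simp: LL_def\<close>)

lemma card_pos:
  assumes "finite H" "p < m" "C \<in> H"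
  shows "real (card {\<Phi>\<in>LL H m. \<Phi>!p = C}) = real (card H) ^ m / card H"
proof -
  have eq: "card {\<Phi>\<in>LL H m. \<Phi>!p = C'} = card {\<Phi>\<in>LL H m. \<Phi>!p = C}" if "C' \<in> H" for C'
    using sum_pos_swap[OF assms(2) that assms(3), of "\<lambda>_. 1::nat"] by simp
  have "card (LL H m) = (\<Sum>C'\<in>H. card {\<Phi>\<in>LL H m. \<Phi>!p = C'})"
    using sum_group_pos[OF assms(1,2), of "\<lambda>_. 1::nat"] by simp
  also have "\<dots> = card H * card {\<Phi>\<in>LL H m. \<Phi>!p = C}" using eq by simp
  finally have "real (card H) ^ m = real (card H) * card {\<Phi>\<in>LL H m. \<Phi>!p = C}"
    using card_LL[OF assms(1)] by (metis of_nat_mult of_nat_power)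
  moreover have "card H > 0" using assms by (auto simp: card_gt_0_iff)
  ultimately show ?thesis by (simp add: field_simps)
qed

lemma defs_update_neg:
  assumes "p < length \<Phi>" "fst (\<Phi>!p) = None" "fst C0 = None"
  shows "defs (set (\<Phi>[p:=C0])) = defs (set \<Phi>)"
proof -
  have "x \<in> set \<Phi>" if "x \<in> set (\<Phi>[p:=C0])" "fst x \<noteq> None" for x
  proof -
    have "x \<in> insert C0 (set \<Phi>)" using that(1) set_update_subset_insert by fast
    moreover have "x \<noteq> C0" using that(2) assms(3) by auto
    ultimately show ?thesis by simp
  qed
  moreover have "x \<in> set (\<Phi>[p:=C0])" if xin: "x \<in> set \<Phi>" "fst x \<noteq> None" for x
  proof -
    obtain q where q: "q < length \<Phi>" "\<Phi>!q = x" using xin(1) by (meson in_set_conv_nth)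
    then have "q \<noteq> p" using xin assms by auto
    then have "\<Phi>[p:=C0]!q = x" using q by simp
    then show ?thesis using nth_mem[of q "\<Phi>[p:=C0]"] q by simp
  qed
  ultimately show ?thesis unfolding defs_def by blast
qed

lemma neg_sum_bound:
  fixes h :: "nat set \<Rightarrow> clause set \<Rightarrow> real"
  assumes hnn: "\<And>S D. h S D \<ge> 0"
  shows "(\<Sum>C\<in>horn_clauses n. if fst C = None then h (snd C) D else 0) \<le> (\<Sum>S\<in>Pow {1..n}. h S D)"
proof -
  let ?H = "horn_clauses n"
  have "(\<Sum>C\<in>?H. if fst C = None then h (snd C) D else 0) = (\<Sum>C\<in>{C\<in>?H. fst C = None}. h (snd C) D)"
    by (rule sum.inter_filter[symmetric]) (rule finite_horn)
  also have "\<dots> = (\<Sum>S\<in>snd ` {C\<in>?H. fst C = None}. h S D)"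
  proof (rule sum.reindex[symmetric, unfolded comp_def])
    show "inj_on snd {C\<in>?H. fst C = None}"
      by (auto simp: inj_on_def prod_eq_iff)
  qed
  also have "\<dots> \<le> (\<Sum>S\<in>Pow {1..n}. h S D)"
    by (rule sum_mono2) (auto simp: hnn horn_clauses_def)
  finally show ?thesis .
qed

lemma numer_count:
  fixes h :: "nat set \<Rightarrow> clause set \<Rightarrow> real"
  assumes n: "n \<ge> 1" and p: "p < m" and hnn: "\<And>S D. h S D \<ge> 0"
    and hb: "\<And>D. (\<Sum>S\<in>Pow {1..n}. h S D) \<le> B"
  shows "(\<Sum>\<Phi>\<in>LL (horn_clauses n) m. if fst (\<Phi>!p) = None then h (snd (\<Phi>!p)) (defs (set \<Phi>)) else 0)
     \<le> B * real (card (horn_clauses n)) ^ m / card (horn_clauses n)"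
proof -
  let ?H = "horn_clauses n"
  define C0 :: clause where "C0 = (None, {1})"
  have C0: "C0 \<in> ?H" "fst C0 = None" using n by (auto simp: C0_def horn_clauses_def)
  let ?L0 = "{\<Psi>\<in>LL ?H m. \<Psi>!p = C0}"
  let ?G = "\<lambda>\<Phi>. if fst (\<Phi>!p) = None then h (snd (\<Phi>!p)) (defs (set \<Phi>)) else 0"
  let ?K = "\<lambda>C \<Psi>. if fst C = None then h (snd C) (defs (set \<Psi>)) else 0"
  have "(\<Sum>\<Phi>\<in>LL ?H m. ?G \<Phi>) = (\<Sum>C\<in>?H. \<Sum>\<Phi>\<in>{\<Phi>\<in>LL ?H m. \<Phi>!p = C}. ?G \<Phi>)"
    by (rule sum_group_pos[OF finite_horn p])
  also have "\<dots> = (\<Sum>C\<in>?H. \<Sum>\<Psi>\<in>?L0. ?K C \<Psi>)"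
  proof (rule sum.cong[OF refl])
    fix C assume C: "C \<in> ?H"
    have "(\<Sum>\<Phi>\<in>{\<Phi>\<in>LL ?H m. \<Phi>!p = C}. ?G \<Phi>) = (\<Sum>\<Phi>\<in>{\<Phi>\<in>LL ?H m. \<Phi>!p = C}. ?K C (\<Phi>[p:=C0]))"
    proof (rule sum.cong[OF refl])
      fix \<Phi> assume "\<Phi> \<in> {\<Phi>\<in>LL ?H m. \<Phi>!p = C}"
      then have "\<Phi>!p = C" "p < length \<Phi>" using p by (auto simp: LL_def)
      then show "?G \<Phi> = ?K C (\<Phi>[p:=C0])"
      proof (cases "fst C = None")
        case True
        then show ?thesis using defs_update_neg[of p \<Phi> C0] C0 \<open>\<Phi>!p = C\<close> \<open>p < length \<Phi>\<close> by simp
      qed (auto simp add: \<open>\<Phi>!p = C\<close>)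
    qed
    also have "\<dots> = (\<Sum>\<Psi>\<in>?L0. ?K C \<Psi>)"
      by (rule sum_pos_swap[OF p C C0(1)])
    finally show "(\<Sum>\<Phi>\<in>{\<Phi>\<in>LL ?H m. \<Phi>!p = C}. ?G \<Phi>) = (\<Sum>\<Psi>\<in>?L0. ?K C \<Psi>)" .
  qed
  also have "\<dots> = (\<Sum>\<Psi>\<in>?L0. \<Sum>C\<in>?H. ?K C \<Psi>)"
    by (rule sum.swap)
  also have "\<dots> \<le> (\<Sum>\<Psi>\<in>?L0. B)"
  proof (rule sum_mono)
    fix \<Psi>
    show "(\<Sum>C\<in>?H. ?K C \<Psi>) \<le> B"
      using neg_sum_bound[where h=h and n=n and D="defs (set \<Psi>)", OF hnn] hb[of "defs (set \<Psi>)"] by linarith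
  qed
  also have "\<dots> = B * real (card ?L0)" by simp
  also have "\<dots> = B * real (card ?H) ^ m / card ?H"
    using card_pos[OF finite_horn p C0(1)] by simp
  finally show ?thesis .
qed

lemma numer_total:
  assumes n: "n \<ge> 1"
  shows "(\<Sum>\<Phi>\<in>LL (horn_clauses n) m. measure_pmf.prob (PUR (set \<Phi>)) {(b,y). \<not> b \<and> y \<le> t})
     \<le> m * (2 ^ Suc t * real (card (horn_clauses n)) ^ m / card (horn_clauses n))"
proof -
  let ?H = "horn_clauses n"
  define h where "h S D = measure_pmf.prob (SEQ D) {s. S \<subseteq> set (take (Suc t) s)}" for S D
  let ?G = "\<lambda>p \<Phi>. if fst (\<Phi>!p) = None then h (snd (\<Phi>!p)) (defs (set \<Phi>)) else 0"
  have "(\<Sum>\<Phi>\<in>LL ?H m. measure_pmf.prob (PUR (set \<Phi>)) {(b,y). \<not> b \<and> y \<le> t})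
      \<le> (\<Sum>\<Phi>\<in>LL ?H m. \<Sum>p<m. ?G p \<Phi>)"
  proof (rule sum_mono)
    fix \<Phi> assume "\<Phi> \<in> LL ?H m"
    then have \<Phi>: "set \<Phi> \<subseteq> ?H" "length \<Phi> = m" by (auto simp: LL_def)
    have "measure_pmf.prob (PUR (set \<Phi>)) {(b,y). \<not> b \<and> y \<le> t}
       \<le> measure_pmf.prob (SEQ (defs (set \<Phi>))) {s. \<exists>S. (None,S) \<in> set \<Phi> \<and> S \<subseteq> set (take (Suc t) s)}"
      by (rule PUR_couple[OF \<Phi>(1)])
    also have "\<dots> \<le> (\<Sum>p<length \<Phi>. ?G p \<Phi>)"
      unfolding h_def by (rule union_bound_neg)
    finally show "measure_pmf.prob (PUR (set \<Phi>)) {(b,y). \<not> b \<and> y \<le> t} \<le> (\<Sum>p<m. ?G p \<Phi>)"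
      using \<Phi>(2) by simp
  qed
  also have "\<dots> = (\<Sum>p<m. \<Sum>\<Phi>\<in>LL ?H m. ?G p \<Phi>)" by (rule sum.swap)
  also have "\<dots> \<le> (\<Sum>p<m. 2 ^ Suc t * real (card ?H) ^ m / card ?H)"
  proof (rule sum_mono)
    fix p assume "p \<in> {..<m}"
    then have p: "p < m" by simp
    show "(\<Sum>\<Phi>\<in>LL ?H m. ?G p \<Phi>) \<le> 2 ^ Suc t * real (card ?H) ^ m / card ?H"
    proof (rule numer_count[OF n p])
      show "h S D \<ge> 0" for S D by (simp add: h_def)
      show "(\<Sum>S\<in>Pow {1..n}. h S D) \<le> 2 ^ Suc t" for D
        unfolding h_def
        by (rule sum_prob_subsets) (auto intro: order.trans[OF card_length])
    qed
  qed
  also have "\<dots> = m * (2 ^ Suc t * real (card ?H) ^ m / card ?H)" by simp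
  finally show ?thesis .
qed

lemma Omega_eq: "Omega n m = pmf_of_set (LL (horn_clauses n) m)"
  by (simp add: Omega_def LL_def conj_commute)

lemma LL_nonempty: "n \<ge> 1 \<Longrightarrow> LL (horn_clauses n) m \<noteq> {}"
proof -
  assume "n \<ge> 1"
  then have "(None, {1}) \<in> horn_clauses n" by (auto simp: horn_clauses_def)
  then have "replicate m (None, {1}) \<in> LL (horn_clauses n) m" by (auto simp: LL_def)
  then show ?thesis by blast
qed

lemma prob_PUR_on_Omega:
  assumes "n \<ge> 1"
  shows "measure_pmf.prob (PUR_on_Omega n m) A
    = (\<Sum>\<Phi>\<in>LL (horn_clauses n) m. measure_pmf.prob (PUR (set \<Phi>)) {r. (\<Phi>, r) \<in> A}) / card (LL (horn_clauses n) m)"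
  unfolding PUR_on_Omega_def Omega_eq
  by (subst prob_bind_pmf_of_set) (auto simp: finite_LL finite_horn LL_nonempty[OF assms] vimage_def)


lemma split_count:
  assumes "finite H"
  shows "card {zs\<in>LL H (a+b). Q zs} = (\<Sum>xs\<in>LL H a. card {ys\<in>LL H b. Q (xs@ys)})"
proof -
  let ?S = "SIGMA xs:LL H a. {ys\<in>LL H b. Q (xs@ys)}"
  have eq: "{zs\<in>LL H (a+b). Q zs} = (\<lambda>(xs,ys). xs@ys) ` ?S"
  proof
    show "{zs\<in>LL H (a+b). Q zs} \<subseteq> (\<lambda>(xs,ys). xs@ys) ` ?S"
    proof
      fix zs assume zs: "zs \<in> {zs\<in>LL H (a+b). Q zs}"
      then have z: "set zs \<subseteq> H" "length zs = a + b" "Q zs" by (auto simp: LL_def)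
      have "take a zs \<in> LL H a" unfolding LL_def using z set_take_subset[of a zs] by auto
      moreover have "drop a zs \<in> LL H b" unfolding LL_def using z set_drop_subset[of a zs] by auto
      ultimately have "(take a zs, drop a zs) \<in> ?S" using z by simp
      moreover have "zs = (\<lambda>(xs,ys). xs@ys) (take a zs, drop a zs)" by simp
      ultimately show "zs \<in> (\<lambda>(xs,ys). xs@ys) ` ?S" by blast
    qed
  next
    show "(\<lambda>(xs,ys). xs@ys) ` ?S \<subseteq> {zs\<in>LL H (a+b). Q zs}"
      unfolding LL_def by auto
  qed
  have inj: "inj_on (\<lambda>(xs,ys). xs@ys) ?S"
  proof (rule inj_onI)
    fix p q assume "p \<in> ?S" "q \<in> ?S" "(\<lambda>(xs,ys). xs@ys) p = (\<lambda>(xs,ys). xs@ys) q"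
    then show "p = q"
      by (cases p, cases q) (simp add: LL_def append_eq_append_conv)
  qed
  have fin: "finite (LL H a)" "\<And>xs. finite {ys\<in>LL H b. Q (xs@ys)}"
    using finite_LL[OF assms] by auto
  show ?thesis
  proof -
    have "card ?S = (\<Sum>xs\<in>LL H a. card {ys\<in>LL H b. Q (xs@ys)})"
      by (rule card_SigmaI[OF fin(1)]) (simp add: fin(2))
    then show ?thesis unfolding eq card_image[OF inj] .
  qed
qed

lemma count_take:
  assumes "finite H" "b \<le> m"
  shows "card {ws\<in>LL H m. Q (take b ws)} = card {us\<in>LL H b. Q us} * card H ^ (m - b)"
proof -
  have "card {ws\<in>LL H m. Q (take b ws)} = card {ws\<in>LL H (b + (m-b)). Q (take b ws)}"
    using assms by simp
  also have "\<dots> = (\<Sum>us\<in>LL H b. card {vs\<in>LL H (m-b). Q (take b (us@vs))})"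
    by (rule split_count[OF assms(1)])
  also have "\<dots> = (\<Sum>us\<in>LL H b. if Q us then card H ^ (m - b) else 0)"
  proof (rule sum.cong[OF refl])
    fix us assume "us \<in> LL H b"
    then have "take b (us@vs) = us" for vs by (simp add: LL_def)
    then show "card {vs\<in>LL H (m-b). Q (take b (us@vs))} = (if Q us then card H ^ (m - b) else 0)"
      using card_LL[OF assms(1)] by simp
  qed
  also have "\<dots> = card {us\<in>LL H b. Q us} * card H ^ (m - b)"
    by (simp add: sum.If_cases finite_LL[OF assms(1)] Int_def)
  finally show ?thesis .
qed

lemma count_hit:
  assumes "finite H" "F \<subseteq> H"
  shows "card {us\<in>LL H b. set us \<inter> F \<noteq> {}} = card H ^ b - (card H - card F) ^ b"
proof -
  have "{us\<in>LL H b. set us \<inter> F \<noteq> {}} = LL H b - LL (H - F) b"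
    by (auto simp: LL_def)
  moreover have "LL (H - F) b \<subseteq> LL H b" by (auto simp: LL_def)
  ultimately show ?thesis
    using assms card_LL[of H b] card_LL[of "H - F" b] finite_LL[of "H - F" b]
    by (simp add: card_Diff_subset card_Diff_subset[OF finite_subset[OF assms(2) assms(1)] assms(2)] finite_subset)
qed

lemma stage:
  assumes H: "finite H" "card H > 0" and ab: "a + b \<le> m"
    and fam: "\<And>xs. xs \<in> LL H a \<Longrightarrow> good xs \<Longrightarrow> Fam xs \<subseteq> H \<and> f \<le> card (Fam xs)"
    and f: "f \<le> card H"
  shows "real (card {zs\<in>LL H m. good (take a zs) \<and> set (take b (drop a zs)) \<inter> Fam (take a zs) \<noteq> {}})
     \<ge> (1 - (1 - real f / card H) ^ b) * real (card {zs\<in>LL H m. good (take a zs)})"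
proof -
  define N where "N = card H"
  have N: "real N > 0" using H by (simp add: N_def)
  have m: "m = a + (m - a)" using ab by simp
  have L: "card {zs\<in>LL H m. good (take a zs) \<and> set (take b (drop a zs)) \<inter> Fam (take a zs) \<noteq> {}}
     = (\<Sum>xs\<in>LL H a. card {ws\<in>LL H (m-a). good xs \<and> set (take b ws) \<inter> Fam xs \<noteq> {}})"
    using split_count[OF H(1), of a "m-a" "\<lambda>zs. good (take a zs) \<and> set (take b (drop a zs)) \<inter> Fam (take a zs) \<noteq> {}"]
      m by (simp add: LL_def cong: conj_cong)
  have R: "card {zs\<in>LL H m. good (take a zs)}
     = (\<Sum>xs\<in>LL H a. card {ws\<in>LL H (m-a). good xs})"
    using split_count[OF H(1), of a "m-a" "\<lambda>zs. good (take a zs)"]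
      m by (simp add: LL_def cong: conj_cong)
  have "(1 - (1 - real f / N) ^ b) * real (card {ws\<in>LL H (m-a). good xs})
      \<le> real (card {ws\<in>LL H (m-a). good xs \<and> set (take b ws) \<inter> Fam xs \<noteq> {}})"
    if xs: "xs \<in> LL H a" for xs
  proof (cases "good xs")
    case False
    then show ?thesis by simp
  next
    case True
    from fam[OF xs True] have F: "Fam xs \<subseteq> H" "f \<le> card (Fam xs)" by auto
    have cF: "card (Fam xs) \<le> N" unfolding N_def using F H card_mono by blast
    have "card {ws\<in>LL H (m-a). good xs \<and> set (take b ws) \<inter> Fam xs \<noteq> {}}
        = card {us\<in>LL H b. set us \<inter> Fam xs \<noteq> {}} * N ^ (m - a - b)"
      using count_take[OF H(1), of b "m-a" "\<lambda>us. set us \<inter> Fam xs \<noteq> {}"] ab True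
      by (simp add: N_def)
    also have "\<dots> = (N ^ b - (N - card (Fam xs)) ^ b) * N ^ (m - a - b)"
      using count_hit[OF H(1) F(1)] by (simp add: N_def)
    finally have c1: "real (card {ws\<in>LL H (m-a). good xs \<and> set (take b ws) \<inter> Fam xs \<noteq> {}})
        = (real N ^ b - (real N - card (Fam xs)) ^ b) * real N ^ (m - a - b)"
      using cF by (simp add: of_nat_diff power_mono)
    have c2: "real (card {ws\<in>LL H (m-a). good xs}) = real N ^ (m - a)"
      using True card_LL[OF H(1)] by (simp add: N_def)
    have e1: "(1 - real f / N) ^ b = (real N - f) ^ b / real N ^ b"
      using N by (simp add: power_divide field_simps)
    have e2: "(real N - card (Fam xs)) ^ b \<le> (real N - f) ^ b"
      using F cF by (intro power_mono) auto
    have e3: "real N ^ (m - a) = real N ^ b * real N ^ (m - a - b)"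
      using ab by (simp flip: power_add)
    have "(1 - (1 - real f / N) ^ b) * real (card {ws\<in>LL H (m-a). good xs})
        = (real N ^ b - (real N - f) ^ b) * real N ^ (m - a - b)"
      unfolding c2 e3 e1 using N by (simp add: field_simps)
    also have "\<dots> \<le> (real N ^ b - (real N - card (Fam xs)) ^ b) * real N ^ (m - a - b)"
      using e2 by (intro mult_right_mono) auto
    finally show ?thesis unfolding c1 .
  qed
  then have "(\<Sum>xs\<in>LL H a. (1 - (1 - real f / N) ^ b) * real (card {ws\<in>LL H (m-a). good xs}))
      \<le> (\<Sum>xs\<in>LL H a. real (card {ws\<in>LL H (m-a). good xs \<and> set (take b ws) \<inter> Fam xs \<noteq> {}}))"
    by (intro sum_mono) auto
  then show ?thesis
    unfolding L R N_def by (simp add: sum_distrib_left)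
qed


definition off :: "(nat \<Rightarrow> nat) \<Rightarrow> nat \<Rightarrow> nat" where
  "off bl j = (\<Sum>i<j. bl i)"

definition blk :: "(nat \<Rightarrow> nat) \<Rightarrow> nat \<Rightarrow> clause list \<Rightarrow> clause list" where
  "blk bl j xs = take (bl j) (drop (off bl j) xs)"

definition newv :: "nat set \<Rightarrow> clause list \<Rightarrow> nat set" where
  "newv A B = {v. \<exists>S. (Some v, S) \<in> set B \<and> S \<subseteq> A \<and> v \<notin> A}"

primrec st :: "(nat \<Rightarrow> nat) \<Rightarrow> nat \<Rightarrow> clause list \<Rightarrow> nat set" where
  "st bl 0 xs = {}"
| "st bl (Suc j) xs = (if newv (st bl j xs) (blk bl j xs) = {} then st bl j xs
     else insert (SOME v. v \<in> newv (st bl j xs) (blk bl j xs)) (st bl j xs))"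

definition FF :: "nat \<Rightarrow> nat set \<Rightarrow> clause set" where
  "FF n A = (Some ` ({1..n} - A)) \<times> Pow A"

lemma off_Suc: "off bl (Suc j) = off bl j + bl j"
  by (simp add: off_def)

lemma blk_append: "off bl (Suc j) \<le> length xs \<Longrightarrow> blk bl j (xs @ ys) = blk bl j xs"
  unfolding blk_def off_Suc by simp

lemma off_mono: "i \<le> j \<Longrightarrow> off bl i \<le> off bl j"
  unfolding off_def by (rule sum_mono2) auto

lemma st_append: "off bl j \<le> length xs \<Longrightarrow> st bl j (xs @ ys) = st bl j xs"
proof (induction j)
  case (Suc j)
  have "off bl j \<le> length xs" using Suc.prems off_mono[of j "Suc j" bl] by simp
  then show ?case using Suc blk_append[OF Suc.prems] by simp
qed simp

lemma st_take: "off bl j \<le> a \<Longrightarrow> st bl j (take a zs) = st bl j zs"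
proof (cases "a \<le> length zs")
  case True
  assume "off bl j \<le> a"
  then show ?thesis using st_append[of bl j "take a zs" "drop a zs"] True by simp
qed simp

lemma blk_take: "off bl (Suc j) \<le> a \<Longrightarrow> blk bl j (take a zs) = blk bl j zs"
  unfolding blk_def off_Suc by (simp add: take_drop min_def)

lemma set_blk: "set (blk bl j xs) \<subseteq> set xs"
  unfolding blk_def by (meson order.trans set_drop_subset set_take_subset)

lemma finite_newv: "finite (newv A B)"
proof -
  have "newv A B \<subseteq> (\<lambda>C. the (fst C)) ` set B" unfolding newv_def by force
  then show ?thesis by (rule finite_subset) simp
qed

lemma st_finite_card: "finite (st bl j xs) \<and> card (st bl j xs) \<le> j"
proof (induction j)
  case (Suc j)
  then show ?case by (auto simp: card_insert_if)
qed simp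

lemma st_sub: "set xs \<subseteq> horn_clauses n \<Longrightarrow> st bl j xs \<subseteq> {1..n}"
proof (induction j)
  case (Suc j)
  show ?case
  proof (cases "newv (st bl j xs) (blk bl j xs) = {}")
    case False
    then have "(SOME v. v \<in> newv (st bl j xs) (blk bl j xs)) \<in> newv (st bl j xs) (blk bl j xs)"
      by (meson all_not_in_conv someI)
    then obtain S where "(Some (SOME v. v \<in> newv (st bl j xs) (blk bl j xs)), S) \<in> set xs"
      unfolding newv_def using set_blk by blast
    then have "(SOME v. v \<in> newv (st bl j xs) (blk bl j xs)) \<in> {1..n}"
      using Suc.prems unfolding horn_clauses_def by auto
    then show ?thesis using Suc False by simp
  qed (use Suc in simp)
qed simp

lemma st_forced: "\<forall>C\<in>set xs. clause_sat a C \<Longrightarrow> v \<in> st bl j xs \<Longrightarrow> a v"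
proof (induction j arbitrary: v)
  case (Suc j)
  show ?case
  proof (cases "newv (st bl j xs) (blk bl j xs) = {}")
    case False
    let ?w = "SOME v. v \<in> newv (st bl j xs) (blk bl j xs)"
    have "?w \<in> newv (st bl j xs) (blk bl j xs)"
      using False by (meson all_not_in_conv someI)
    then obtain S where S: "(Some ?w, S) \<in> set xs" "S \<subseteq> st bl j xs"
      unfolding newv_def using set_blk by blast
    then have "clause_sat a (Some ?w, S)" using Suc.prems(1) by blast
    moreover have "\<forall>u\<in>S. a u" using S(2) Suc.IH[OF Suc.prems(1)] by blast
    ultimately have "a ?w" by (auto simp: clause_sat_def)
    then show ?thesis using Suc False by auto
  qed (use Suc in simp)
qed simp

lemma st_step:
  assumes "card (st bl j xs) = j" "set (blk bl j xs) \<inter> FF n (st bl j xs) \<noteq> {}"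
  shows "card (st bl (Suc j) xs) = Suc j"
proof -
  have ne: "newv (st bl j xs) (blk bl j xs) \<noteq> {}"
    using assms(2) unfolding FF_def newv_def by blast
  let ?w = "SOME v. v \<in> newv (st bl j xs) (blk bl j xs)"
  have "?w \<in> newv (st bl j xs) (blk bl j xs)"
    using ne by (meson all_not_in_conv someI)
  then have "?w \<notin> st bl j xs" unfolding newv_def by blast
  then show ?thesis using ne assms(1) st_finite_card[of bl j xs] by simp
qed

lemma FF_sub: "A \<subseteq> {1..n} \<Longrightarrow> FF n A \<subseteq> horn_clauses n"
  unfolding FF_def horn_clauses_def by auto

lemma card_FF: "A \<subseteq> {1..n} \<Longrightarrow> card (FF n A) = (n - card A) * 2 ^ card A"
proof -
  assume A: "A \<subseteq> {1..n}"
  have fA: "finite A" using A finite_subset by blast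
  have "card (Some ` ({1..n} - A)) = n - card A"
    using A fA by (simp add: card_image card_Diff_subset)
  then show ?thesis unfolding FF_def
    using fA by (simp add: card_cartesian_product card_Pow)
qed


lemma card_horn_bounds:
  "n * 2^n \<le> card (horn_clauses n)" "card (horn_clauses n) \<le> (n+1) * 2^n"
proof -
  have "(1::nat) \<le> 2^n" by simp
  then have "(n+1) * 2^n \<ge> (1::nat)" by (metis add.commute le_add1 mult_le_mono nat_mult_1 plus_1_eq_Suc)
  then show "n * 2^n \<le> card (horn_clauses n)" "card (horn_clauses n) \<le> (n+1) * 2^n"
    unfolding card_horn using \<open>(1::nat) \<le> 2^n\<close> by (simp_all add: algebra_simps del: one_le_power) (use \<open>(1::nat) \<le> 2^n\<close> in arith)
qed

lemma card_horn_pos: "n \<ge> 1 \<Longrightarrow> card (horn_clauses n) > 0"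
  using card_horn_bounds(1)[of n] by (metis less_le_trans nat_0_less_mult_iff pos2 zero_less_power less_le_trans le_neq_implies_less not_one_le_zero zero_less_iff_neq_zero)

lemma good_step:
  assumes n: "n \<ge> 1" and m: "off bl (Suc j) \<le> m"
  shows "real (card {zs\<in>LL (horn_clauses n) m. card (st bl (Suc j) zs) = Suc j})
     \<ge> (1 - (1 - real ((n - j) * 2 ^ j) / card (horn_clauses n)) ^ bl j)
        * real (card {zs\<in>LL (horn_clauses n) m. card (st bl j zs) = j})"
proof -
  let ?H = "horn_clauses n"
  let ?a = "off bl j" and ?b = "bl j"
  have Hpos: "card ?H > 0" by (rule card_horn_pos[OF n])
  have fam: "FF n (st bl j xs) \<subseteq> ?H \<and> (n - j) * 2 ^ j \<le> card (FF n (st bl j xs))"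
    if "xs \<in> LL ?H ?a" "card (st bl j xs) = j" for xs
  proof -
    have "st bl j xs \<subseteq> {1..n}" using that st_sub by (auto simp: LL_def)
    then show ?thesis using FF_sub card_FF that(2) by auto
  qed
  have f: "(n - j) * 2 ^ j \<le> card ?H"
  proof (cases "j \<le> n")
    case True
    have "(n - j) * 2 ^ j \<le> n * 2 ^ n" by (intro mult_mono power_increasing True) auto
    then show ?thesis using card_horn_bounds(1)[of n] by linarith
  qed simp
  have ab: "?a + ?b \<le> m" using m by (simp add: off_Suc)
  have "(1 - (1 - real ((n - j) * 2 ^ j) / card ?H) ^ ?b)
        * real (card {zs\<in>LL ?H m. card (st bl j (take ?a zs)) = j})
      \<le> real (card {zs\<in>LL ?H m. card (st bl j (take ?a zs)) = j \<and>
            set (take ?b (drop ?a zs)) \<inter> FF n (st bl j (take ?a zs)) \<noteq> {}})"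
    by (rule stage[OF finite_horn Hpos ab]) (use fam f in auto)
  also have "\<dots> \<le> real (card {zs\<in>LL ?H m. card (st bl (Suc j) zs) = Suc j})"
  proof (intro of_nat_mono card_mono)
    show "finite {zs\<in>LL ?H m. card (st bl (Suc j) zs) = Suc j}" by (simp add: finite_LL finite_horn)
    show "{zs\<in>LL ?H m. card (st bl j (take ?a zs)) = j \<and>
            set (take ?b (drop ?a zs)) \<inter> FF n (st bl j (take ?a zs)) \<noteq> {}}
        \<subseteq> {zs\<in>LL ?H m. card (st bl (Suc j) zs) = Suc j}"
    proof
      fix zs assume "zs \<in> {zs\<in>LL ?H m. card (st bl j (take ?a zs)) = j \<and>
            set (take ?b (drop ?a zs)) \<inter> FF n (st bl j (take ?a zs)) \<noteq> {}}"
      then have z: "zs \<in> LL ?H m" "card (st bl j (take ?a zs)) = j"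
        "set (take ?b (drop ?a zs)) \<inter> FF n (st bl j (take ?a zs)) \<noteq> {}" by auto
      then have "card (st bl (Suc j) zs) = Suc j"
        using st_step[of bl j zs n] st_take[of bl j ?a zs] by (simp add: blk_def)
      then show "zs \<in> {zs\<in>LL ?H m. card (st bl (Suc j) zs) = Suc j}" using z(1) by simp
    qed
  qed
  finally have X: "(1 - (1 - real ((n - j) * 2 ^ j) / card ?H) ^ ?b)
        * real (card {zs\<in>LL ?H m. card (st bl j (take ?a zs)) = j})
      \<le> real (card {zs\<in>LL ?H m. card (st bl (Suc j) zs) = Suc j})" .
  have "{zs\<in>LL ?H m. card (st bl j (take ?a zs)) = j} = {zs\<in>LL ?H m. card (st bl j zs) = j}"
    using st_take[of bl j ?a] by simp
  then show ?thesis using X by simp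
qed


lemma f_le: "(n - j) * 2 ^ j \<le> card (horn_clauses n)"
proof (cases "j \<le> n")
  case True
  have "(n - j) * 2 ^ j \<le> n * 2 ^ n" by (intro mult_mono power_increasing True) auto
  then show ?thesis using card_horn_bounds(1)[of n] by linarith
qed simp

lemma one_minus_pow_nonneg: "0 \<le> x \<Longrightarrow> x \<le> 1 \<Longrightarrow> 0 \<le> 1 - (1 - (x::real)) ^ b"
  by (simp add: power_le_one)

lemma good_prod:
  assumes n: "n \<ge> 1" and m: "off bl R \<le> m"
  shows "real (card {zs\<in>LL (horn_clauses n) m. card (st bl R zs) = R})
     \<ge> (\<Prod>j<R. 1 - (1 - real ((n - j) * 2 ^ j) / card (horn_clauses n)) ^ bl j)
        * real (card (LL (horn_clauses n) m))"
  using m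
proof (induction R)
  case 0
  then show ?case by simp
next
  case (Suc R)
  let ?H = "horn_clauses n"
  have "off bl R \<le> m" using Suc.prems off_mono[of R "Suc R" bl] by simp
  note IH = Suc.IH[OF this]
  have fl: "real ((n - R) * 2 ^ R) \<le> real (card ?H)" using f_le[of n R] by (simp only: of_nat_le_iff)
  have x: "0 \<le> real ((n - R) * 2 ^ R) / card ?H" "real ((n - R) * 2 ^ R) / card ?H \<le> 1"
    using fl card_horn_pos[OF n] by (auto simp: divide_le_eq_1 simp del: of_nat_mult of_nat_power)
  have s: "0 \<le> 1 - (1 - real ((n - R) * 2 ^ R) / card ?H) ^ bl R"
    by (rule one_minus_pow_nonneg[OF x])
  have "(\<Prod>j<Suc R. 1 - (1 - real ((n - j) * 2 ^ j) / card ?H) ^ bl j) * real (card (LL ?H m))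
     = (1 - (1 - real ((n - R) * 2 ^ R) / card ?H) ^ bl R) *
       ((\<Prod>j<R. 1 - (1 - real ((n - j) * 2 ^ j) / card ?H) ^ bl j) * real (card (LL ?H m)))"
    by (simp add: algebra_simps)
  also have "\<dots> \<le> (1 - (1 - real ((n - R) * 2 ^ R) / card ?H) ^ bl R) *
       real (card {zs\<in>LL ?H m. card (st bl R zs) = R})"
    by (rule mult_left_mono[OF IH s])
  also have "\<dots> \<le> real (card {zs\<in>LL ?H m. card (st bl (Suc R) zs) = Suc R})"
    by (rule good_step[OF n Suc.prems])
  finally show ?case .
qed

definition GG :: "nat set \<Rightarrow> clause set" where
  "GG A = {None} \<times> (Pow A - {{}})"

lemma GG_sub: "A \<subseteq> {1..n} \<Longrightarrow> GG A \<subseteq> horn_clauses n"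
  unfolding GG_def horn_clauses_def by auto

lemma card_GG: "finite A \<Longrightarrow> card (GG A) = 2 ^ card A - 1"
  unfolding GG_def by (simp add: card_cartesian_product card_Pow card_Diff_singleton)

lemma last_stage:
  assumes n: "n \<ge> 1" and m: "off bl R + b \<le> m" and Rn: "R \<le> n"
  shows "real (card {zs\<in>LL (horn_clauses n) m. \<not> satisfiable zs})
     \<ge> (1 - (1 - real (2 ^ R - 1) / card (horn_clauses n)) ^ b)
        * real (card {zs\<in>LL (horn_clauses n) m. card (st bl R zs) = R})"
proof -
  let ?H = "horn_clauses n"
  let ?a = "off bl R"
  have fam: "GG (st bl R xs) \<subseteq> ?H \<and> 2 ^ R - 1 \<le> card (GG (st bl R xs))"
    if "xs \<in> LL ?H ?a" "card (st bl R xs) = R" for xs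
  proof -
    have "st bl R xs \<subseteq> {1..n}" using that st_sub by (auto simp: LL_def)
    then show ?thesis using GG_sub card_GG that(2) st_finite_card[of bl R xs] by auto
  qed
  have f: "2 ^ R - 1 \<le> card ?H"
  proof -
    have "(2::nat) ^ R \<le> 2 ^ n" by (rule power_increasing[OF Rn]) auto
    also have "\<dots> \<le> n * 2 ^ n" using n by simp
    finally show ?thesis using card_horn_bounds(1)[of n] by linarith
  qed
  have "(1 - (1 - real (2 ^ R - 1) / card ?H) ^ b)
        * real (card {zs\<in>LL ?H m. card (st bl R (take ?a zs)) = R})
      \<le> real (card {zs\<in>LL ?H m. card (st bl R (take ?a zs)) = R \<and>
            set (take b (drop ?a zs)) \<inter> GG (st bl R (take ?a zs)) \<noteq> {}})"
    by (rule stage[OF finite_horn card_horn_pos[OF n] m]) (use fam f in auto)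
  also have "\<dots> \<le> real (card {zs\<in>LL ?H m. \<not> satisfiable zs})"
  proof (intro of_nat_mono card_mono)
    show "finite {zs\<in>LL ?H m. \<not> satisfiable zs}" by (simp add: finite_LL finite_horn)
    show "{zs\<in>LL ?H m. card (st bl R (take ?a zs)) = R \<and>
            set (take b (drop ?a zs)) \<inter> GG (st bl R (take ?a zs)) \<noteq> {}}
        \<subseteq> {zs\<in>LL ?H m. \<not> satisfiable zs}"
    proof
      fix zs assume "zs \<in> {zs\<in>LL ?H m. card (st bl R (take ?a zs)) = R \<and>
            set (take b (drop ?a zs)) \<inter> GG (st bl R (take ?a zs)) \<noteq> {}}"
      then have z: "zs \<in> LL ?H m"
        "set (take b (drop ?a zs)) \<inter> GG (st bl R zs) \<noteq> {}"
        using st_take[of bl R ?a zs] by auto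
      then obtain S where S: "(None, S) \<in> set zs" "S \<subseteq> st bl R zs" "S \<noteq> {}"
        unfolding GG_def by (auto dest: in_set_takeD in_set_dropD)
      have "\<not> satisfiable zs"
      proof
        assume "satisfiable zs"
        then obtain a where a: "\<forall>C\<in>set zs. clause_sat a C" unfolding satisfiable_def by blast
        then have "clause_sat a (None, S)" using S(1) by blast
        moreover have "\<forall>v\<in>S. a v" using S(2) st_forced[OF a] by blast
        ultimately show False by (auto simp: clause_sat_def)
      qed
      then show "zs \<in> {zs\<in>LL ?H m. \<not> satisfiable zs}" using z(1) by simp
    qed
  qed
  finally have X: "(1 - (1 - real (2 ^ R - 1) / card ?H) ^ b)
        * real (card {zs\<in>LL ?H m. card (st bl R (take ?a zs)) = R})
      \<le> real (card {zs\<in>LL ?H m. \<not> satisfiable zs})" .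
  have "{zs\<in>LL ?H m. card (st bl R (take ?a zs)) = R} = {zs\<in>LL ?H m. card (st bl R zs) = R}"
    using st_take[of bl R ?a] by simp
  then show ?thesis using X by simp
qed


lemma sum_inv_sq: "(\<Sum>j<R. 1 / (real j + 1)^2) \<le> 2 - 2 / (real R + 1)"
proof (induction R)
  case (Suc R)
  define t where "t = real R + 1"
  have t: "t \<ge> 1" by (simp add: t_def)
  have e: "2 / t - 2 / (t + 1) = 2 / (t * (t + 1))" using t by (simp add: field_simps)
  have "t \<le> t * t" using mult_left_mono[of 1 t t] t by simp
  then have "t * (t + 1) / 2 \<le> t * t" by (simp add: algebra_simps)
  then have "1 / (t * t) \<le> 1 / (t * (t + 1) / 2)"
    using t by (intro frac_le) (auto intro: mult_pos_pos)
  then have "1 / t^2 \<le> 2 / t - 2 / (t + 1)" unfolding e by (simp add: power2_eq_square)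
  then have "1 / (real R + 1)^2 \<le> 2 / (real R + 1) - 2 / (real R + 2)"
    by (simp add: t_def add.assoc)
  moreover have "(\<Sum>j<Suc R. 1 / (real j + 1)^2) = (\<Sum>j<R. 1 / (real j + 1)^2) + 1 / (real R + 1)^2"
    by simp
  moreover have "2 / (real (Suc R) + 1) = 2 / (real R + 2)" by (simp add: add.commute)
  ultimately show ?case using Suc.IH by linarith
qed simp

lemma real_div_le: "real (m div d) \<le> real m / real d"
proof (cases "d = 0")
  case False
  have "d * (m div d) \<le> m" by simp
  then have "real d * real (m div d) \<le> real m" by (metis of_nat_le_iff of_nat_mult)
  then show ?thesis using False by (simp add: field_simps)
qed simp

lemma real_div_ge: "d > 0 \<Longrightarrow> real (m div d) \<ge> real m / real d - 1"
proof -
  assume d: "d > 0"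
  have "m = d * (m div d) + m mod d" by simp
  then have "real m = real d * real (m div d) + real (m mod d)" by (metis of_nat_add of_nat_mult)
  moreover have "real (m mod d) < real d" using d by simp
  ultimately have "real m < real d * (real (m div d) + 1)" by (simp add: algebra_simps)
  then show ?thesis using d by (simp add: field_simps)
qed

lemma off_bound: "real (off (\<lambda>j. m div (4 * (j+1)^2)) R) \<le> real m / 2"
proof -
  have "real (off (\<lambda>j. m div (4 * (j+1)^2)) R) = (\<Sum>j<R. real (m div (4 * (j+1)^2)))"
    by (simp add: off_def)
  also have "\<dots> \<le> (\<Sum>j<R. real m / 4 * (1 / (real j + 1)^2))"
  proof (rule sum_mono)
    fix j
    have "real (m div (4 * (j+1)^2)) \<le> real m / real (4 * (j+1)^2)" by (rule real_div_le)
    also have "\<dots> = real m / 4 * (1 / (real j + 1)^2)" by simp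
    finally show "real (m div (4 * (j+1)^2)) \<le> real m / 4 * (1 / (real j + 1)^2)" .
  qed
  also have "\<dots> = real m / 4 * (\<Sum>j<R. 1 / (real j + 1)^2)" by (simp add: sum_distrib_left)
  also have "\<dots> \<le> real m / 4 * 2"
  proof (rule mult_left_mono)
    have "2 / (real R + 1) \<ge> 0" by simp
    then show "(\<Sum>j<R. 1 / (real j + 1)^2) \<le> 2" using sum_inv_sq[of R] by linarith
  qed simp
  finally show ?thesis by simp
qed

lemma pow_exp_bound: "0 \<le> x \<Longrightarrow> x \<le> 1 \<Longrightarrow> (1 - x) ^ b \<le> exp (- (x * real b))"
proof -
  assume x: "0 \<le> x" "x \<le> (1::real)"
  have "(1 - x) ^ b \<le> exp (- x) ^ b"
    using exp_ge_add_one_self[of "-x"] x by (intro power_mono) auto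
  also have "\<dots> = exp (- (x * real b))" by (simp add: exp_of_nat_mult[symmetric] algebra_simps)
  finally show ?thesis .
qed

lemma weierstrass_prod:
  assumes "finite I" "\<And>i. i \<in> I \<Longrightarrow> 0 \<le> x i \<and> x i \<le> (1::real)"
  shows "(\<Prod>i\<in>I. 1 - x i) \<ge> 1 - (\<Sum>i\<in>I. x i)"
  using assms
proof (induction I rule: finite_induct)
  case (insert a I)
  have IH: "(\<Prod>i\<in>I. 1 - x i) \<ge> 1 - (\<Sum>i\<in>I. x i)" using insert by auto
  have p: "0 \<le> (\<Prod>i\<in>I. 1 - x i)" "(\<Prod>i\<in>I. 1 - x i) \<le> 1"
    using insert.prems by (auto intro!: prod_nonneg prod_le_1)
  have xa: "0 \<le> x a" "x a \<le> 1" using insert.prems by auto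
  have s: "0 \<le> (\<Sum>i\<in>I. x i)" using insert.prems by (auto intro!: sum_nonneg)
  have "1 - (x a + (\<Sum>i\<in>I. x i)) \<le> (1 - x a) * (1 - (\<Sum>i\<in>I. x i))"
    using xa s by (simp add: algebra_simps)
  also have "\<dots> \<le> (1 - x a) * (\<Prod>i\<in>I. 1 - x i)"
    using IH xa by (intro mult_left_mono) auto
  finally show ?case using insert.hyps by simp
qed simp

lemma prod_lower_uniform:
  fixes x :: "nat \<Rightarrow> real"
  assumes x01: "\<And>j. 0 \<le> x j \<and> x j < 1"
    and ev: "eventually (\<lambda>j. x j \<le> (1/2) ^ (j + 2)) at_top"
  shows "\<exists>\<delta>>0. \<forall>R. (\<Prod>j<R. 1 - x j) \<ge> \<delta>"
proof -
  obtain J where J: "\<And>j. j \<ge> J \<Longrightarrow> x j \<le> (1/2) ^ (j + 2)"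
    using ev unfolding eventually_at_top_linorder by blast
  define P where "P = (\<Prod>j<J. 1 - x j)"
  have f01: "0 \<le> 1 - x j" "1 - x j \<le> 1" "0 < 1 - x j" for j using x01[of j] by linarith+
  have Ppos: "P > 0" unfolding P_def by (rule prod_pos) (use f01 in blast)
  have mono: "(\<Prod>j<R'. 1 - x j) \<le> (\<Prod>j<R. 1 - x j)" if "R \<le> R'" for R R'
  proof -
    have "(\<Prod>j<R'. 1 - x j) = (\<Prod>j<R. 1 - x j) * (\<Prod>j\<in>{R..<R'}. 1 - x j)"
      using prod.union_disjoint[of "{..<R}" "{R..<R'}" "\<lambda>j. 1 - x j"] that
      by (simp add: ivl_disj_int_one ivl_disj_un_one)
    also have "\<dots> \<le> (\<Prod>j<R. 1 - x j) * 1"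
    proof (rule mult_left_mono)
      show "(\<Prod>j\<in>{R..<R'}. 1 - x j) \<le> 1" by (rule prod_le_1) (use f01 in blast)
      show "0 \<le> (\<Prod>j<R. 1 - x j)" by (rule prod_nonneg) (use f01 in blast)
    qed
    finally show ?thesis by simp
  qed
  have big: "(\<Prod>j<R. 1 - x j) \<ge> P / 2" if "R \<ge> J" for R
  proof -
    have eq: "(\<Prod>j<R. 1 - x j) = P * (\<Prod>j\<in>{J..<R}. 1 - x j)"
      unfolding P_def using prod.union_disjoint[of "{..<J}" "{J..<R}" "\<lambda>j. 1 - x j"] that
      by (simp add: ivl_disj_int_one ivl_disj_un_one)
    have "(\<Prod>j\<in>{J..<R}. 1 - x j) \<ge> 1 - (\<Sum>j\<in>{J..<R}. x j)"
      by (rule weierstrass_prod) (use x01 in \<open>auto simp: less_imp_le\<close>)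
    moreover have "(\<Sum>j\<in>{J..<R}. x j) \<le> (\<Sum>j\<in>{J..<R}. (1/2) ^ (j + 2))"
      by (rule sum_mono) (use J in simp)
    moreover have "(\<Sum>j\<in>{J..<R}. (1/2::real) ^ (j + 2)) \<le> (\<Sum>j<R. (1/2) ^ (j + 2))"
      by (rule sum_mono2) auto
    moreover have "(\<Sum>j<R. (1/2::real) ^ (j + 2)) = 1/4 * (\<Sum>j<R. (1/2) ^ j)"
      by (simp add: sum_distrib_left power_add)
    moreover have "(\<Sum>j<R. (1/2::real) ^ j) \<le> 2"
      by (simp add: sum_gp_strict)
    ultimately have "(\<Prod>j\<in>{J..<R}. 1 - x j) \<ge> 1/2" by linarith
    then show ?thesis unfolding eq using Ppos by simp
  qed
  show ?thesis
  proof (intro exI[of _ "P / 2"] conjI allI)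
    show "P / 2 > 0" using Ppos by simp
    fix R
    show "(\<Prod>j<R. 1 - x j) \<ge> P / 2"
      using big[of "max R J"] mono[of R "max R J"] by simp
  qed
qed


lemma sq_le_pow: "(R+1)^2 \<le> 4 * (2::nat)^R"
proof (induction R)
  case (Suc R)
  show ?case
  proof (cases "R \<ge> 2")
    case True
    have "2*2 \<le> R*R" using True by (intro mult_mono) auto
    then have "(Suc R + 1)^2 \<le> 2 * (R+1)^2"
      by (simp add: power2_eq_square algebra_simps)
    then show ?thesis using Suc by simp
  next
    case False
    then have "R = 0 \<or> R = 1" by auto
    then show ?thesis by (auto simp: power2_eq_square)
  qed
qed simp

lemma R_facts:
  assumes n: "n \<ge> 32" and R: "R = Suc (floor_log n)"
  shows "n < 2^R" "2^R \<le> 2*n" "2*(R+1) \<le> n" "(R+1)^2 \<le> 8*n" "R \<le> n"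
proof -
  show a: "n < 2^R" using floor_log_exp2_gt[of n] R by simp
  show b: "2^R \<le> 2*n" using floor_log_exp2_le[of n] n R by simp
  show c: "(R+1)^2 \<le> 8*n" using sq_le_pow[of R] b by linarith
  show d: "2*(R+1) \<le> n"
  proof (rule ccontr)
    assume "\<not> 2*(R+1) \<le> n"
    then have "n < 2*(R+1)" by simp
    then have "n * n < (2*(R+1)) * (2*(R+1))" by (intro mult_strict_mono) auto
    also have "\<dots> = 4 * (R+1)^2" by (simp add: power2_eq_square)
    also have "\<dots> \<le> 32 * n" using c by simp
    finally have "n * n < 32 * n" .
    then have "n < 32" by simp
    then show False using n by simp
  qed
  show "R \<le> n" using d by simp
qed

lemma one_minus_pow_ge:
  assumes "0 \<le> y" "y \<le> 1" "L \<le> y * real b"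
  shows "1 - exp (- L) \<le> 1 - (1 - y) ^ b"
proof -
  have "(1 - y) ^ b \<le> exp (- (y * real b))" by (rule pow_exp_bound[OF assms(1,2)])
  also have "\<dots> \<le> exp (- L)" using assms(3) by simp
  finally show ?thesis by simp
qed


lemma ev_x:
  assumes c: "c > 0"
  shows "eventually (\<lambda>j. exp (- (c * 2^j / (16 * (real j + 1)^2))) \<le> (1/2::real) ^ (j + 2)) at_top"
proof -
  have lim: "((\<lambda>j::nat. (real j + 2) * (real j + 1)^2 / 2^j) \<longlongrightarrow> 0) at_top" by real_asymp
  have l2: "ln (2::real) > 0" by simp
  have "c / (16 * ln 2) > 0" using c l2 by simp
  then have "eventually (\<lambda>j. (real j + 2) * (real j + 1)^2 / 2^j < c / (16 * ln 2)) at_top"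
    using order_tendstoD(2)[OF lim] by blast
  then show ?thesis
  proof (rule eventually_mono)
    fix j :: nat assume h: "(real j + 2) * (real j + 1)^2 / 2^j < c / (16 * ln 2)"
    have "(real j + 2) * (real j + 1)^2 * (16 * ln 2) < c * 2^j"
      using h l2 by (simp add: field_simps)
    then have "(real j + 2) * ln 2 \<le> c * 2^j / (16 * (real j + 1)^2)"
      by (simp add: field_simps)
    then have "exp (- (c * 2^j / (16 * (real j + 1)^2))) \<le> exp (- ((real j + 2) * ln 2))"
      by simp
    also have "exp (- ((real j + 2) * ln 2)) = exp (real (j+2) * (- ln 2))" by simp
    also have "\<dots> = exp (- ln 2) ^ (j+2)" by (rule exp_of_nat_mult)
    also have "exp (- ln 2) = (1/2::real)" by (simp add: exp_minus)
    finally show "exp (- (c * 2^j / (16 * (real j + 1)^2))) \<le> (1/2::real) ^ (j + 2)" .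
  qed
qed

lemma ev_n:
  assumes c: "c > 0"
  shows "\<exists>n1. \<forall>n\<ge>n1. 1 + 32 * real n < c * 2^n / 2"
proof -
  have lim: "((\<lambda>n::nat. (1 + 32 * real n) / 2^n) \<longlongrightarrow> 0) at_top" by real_asymp
  have "eventually (\<lambda>n. (1 + 32 * real n) / 2^n < c / 2) at_top"
    using order_tendstoD(2)[OF lim, of "c/2"] c by (simp only: half_gt_zero_iff)
  then obtain n1 where "\<And>n. n \<ge> n1 \<Longrightarrow> (1 + 32 * real n) / 2^n < c / 2"
    unfolding eventually_at_top_linorder by blast
  then show ?thesis by (intro exI[of _ n1]) (auto simp: field_simps)
qed


lemma denom_at_n:
  assumes c: "c > 0" and n32: "n \<ge> 32" and key: "1 + 32 * real n < c * 2^n / 2"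
    and d0: "\<forall>R. (\<Prod>j<R. 1 - exp (- (c * 2^j / (16 * (real j + 1)^2)))) \<ge> \<delta>0"
  shows "real (card {zs\<in>LL (horn_clauses n) (nat \<lfloor>c * 2^n\<rfloor>). \<not> satisfiable zs})
     \<ge> (1 - exp (- (c / 8))) * \<delta>0 * real (card (LL (horn_clauses n) (nat \<lfloor>c * 2^n\<rfloor>)))"
proof -
  define m where "m = nat \<lfloor>c * 2^n\<rfloor>"
  define N where "N = card (horn_clauses n)"
  define bl where "bl j = m div (4 * (j+1)^2)" for j
  define R where "R = Suc (floor_log n)"
  define b where "b = m div 2"
  define lam where "lam j = c * 2^j / (16 * (real j + 1)^2)" for j :: nat
  have n1: "n \<ge> 1" using n32 by simp
  note Rf = R_facts[OF n32 R_def]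
  have Npos: "real N > 0" using card_horn_pos[OF n1] by (simp add: N_def)
  have "N \<le> (n+1) * 2^n" using card_horn_bounds(2)[of n] by (simp add: N_def)
  then have "real N \<le> real ((n+1) * 2^n)" by (simp only: of_nat_le_iff)
  then have Nup: "real N \<le> (real n + 1) * 2^n" by (simp add: algebra_simps)
  have mge: "real m \<ge> c * 2^n - 1"
  proof -
    have "c * 2^n \<ge> 0" using c by simp
    then have "real m = of_int \<lfloor>c * 2^n\<rfloor>" unfolding m_def by simp
    then show ?thesis by linarith
  qed
  have mle: "real m \<le> c * 2^n"
  proof -
    have "c * 2^n \<ge> 0" using c by simp
    then have "real m = of_int \<lfloor>c * 2^n\<rfloor>" unfolding m_def by simp
    then show ?thesis by linarith
  qed
  have offb: "off bl R + b \<le> m"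
  proof -
    have "real (off bl R) \<le> real m / 2" unfolding bl_def by (rule off_bound)
    moreover have "real b \<le> real m / 2" unfolding b_def using real_div_le[of m 2] by simp
    ultimately have "real (off bl R + b) \<le> real m" by simp
    then show ?thesis by (simp only: of_nat_le_iff)
  qed
  have offR: "off bl R \<le> m" using offb by simp
  have stagej: "1 - exp (- lam j) \<le> 1 - (1 - real ((n - j) * 2 ^ j) / real N) ^ bl j" if j: "j < R" for j
  proof -
    define D where "D = (real j + 1)^2"
    have Dpos: "D > 0" by (simp add: D_def)
    have "(j+1)^2 \<le> (R+1)^2" using j by (intro power_mono) auto
    then have "real ((j+1)^2) \<le> real ((R+1)^2)" by (simp only: of_nat_le_iff)
    then have "D \<le> real ((R+1)^2)" unfolding D_def by simp
    also have "real ((R+1)^2) \<le> real (8 * n)" using Rf(4) by (simp only: of_nat_le_iff)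
    also have "real (8 * n) = 8 * real n" by simp
    finally have D8: "D \<le> 8 * real n" .
    have "2 * (j + 2) \<le> n" using Rf(3) j by simp
    then have nj: "real (n - j) \<ge> (real n + 1) / 2" by (simp add: of_nat_diff)
    define y where "y = real ((n - j) * 2 ^ j) / real N"
    have y01: "0 \<le> y" "y \<le> 1"
      unfolding y_def using Npos f_le[of n j] by (auto simp: N_def divide_le_eq_1 simp del: of_nat_mult of_nat_power)
    have yl: "y \<ge> 2^j / (2 * 2^n)"
    proof -
      have "((real n + 1) / 2 * 2^j) / ((real n + 1) * 2^n) \<le> (real (n - j) * 2^j) / real N"
        using nj Nup Npos by (intro frac_le) (auto intro!: mult_right_mono)
      moreover have "((real n + 1) / 2 * 2^j) / ((real n + 1) * 2^n) = 2^j / (2 * 2^n)"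
      proof -
        have a: "real n + 1 \<noteq> 0" by linarith
        have "((real n + 1) / 2 * 2^j) / ((real n + 1) * 2^n) = ((real n + 1) * (2^j / 2)) / ((real n + 1) * 2^n)"
          by simp
        also have "\<dots> = (2^j / 2) / 2^n" by (rule mult_divide_mult_cancel_left[OF a])
        also have "\<dots> = 2^j / (2 * 2^n)" by simp
        finally show ?thesis .
      qed
      ultimately show ?thesis unfolding y_def by simp
    qed
    have bll: "real (bl j) \<ge> c * 2^n / (8 * D)"
    proof -
      have "real (bl j) \<ge> real m / real (4 * (j+1)^2) - 1" unfolding bl_def by (rule real_div_ge) simp
      also have "real (4 * (j+1)^2) = 4 * D" by (simp add: D_def)
      finally have "real (bl j) \<ge> real m / (4 * D) - 1" .
      moreover have "real m / (4 * D) - 1 \<ge> (c * 2^n - 1) / (4 * D) - 1"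
        using mge Dpos by (simp add: divide_right_mono)
      moreover have "(c * 2^n - 1) / (4 * D) - 1 \<ge> c * 2^n / (8 * D)"
      proof -
        have "1 + 4 * D \<le> c * 2^n / 2" using D8 key by linarith
        then show ?thesis using Dpos by (simp add: field_simps)
      qed
      ultimately show ?thesis by linarith
    qed
    have "lam j = 2^j / (2 * 2^n) * (c * 2^n / (8 * D))"
      unfolding lam_def D_def by (simp add: field_simps)
    also have "\<dots> \<le> y * real (bl j)"
      using yl bll c Dpos y01 by (intro mult_mono) auto
    finally have "lam j \<le> y * real (bl j)" .
    then show ?thesis unfolding y_def by (rule one_minus_pow_ge[OF y01[unfolded y_def]])
  qed
  have prodge: "\<delta>0 \<le> (\<Prod>j<R. 1 - (1 - real ((n - j) * 2 ^ j) / real N) ^ bl j)"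
  proof -
    have "(\<Prod>j<R. 1 - exp (- lam j)) \<le> (\<Prod>j<R. 1 - (1 - real ((n - j) * 2 ^ j) / real N) ^ bl j)"
    proof (rule prod_mono)
      fix j assume "j \<in> {..<R}"
      then show "0 \<le> 1 - exp (- lam j) \<and> 1 - exp (- lam j) \<le> 1 - (1 - real ((n - j) * 2 ^ j) / real N) ^ bl j"
        using stagej[of j] c by (auto simp: lam_def)
    qed
    then show ?thesis using d0 unfolding lam_def by (meson order.trans)
  qed
  have lastf: "1 - exp (- (c / 8)) \<le> 1 - (1 - real (2 ^ R - 1) / real N) ^ b"
  proof -
    define y where "y = real (2 ^ R - 1) / real N"
    have nR: "n \<le> 2 ^ R - 1" using Rf(1) by simp
    have "2 ^ R - 1 \<le> N"
    proof -
      have "(2::nat) ^ R \<le> 2 ^ n" by (rule power_increasing[OF Rf(5)]) auto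
      also have "\<dots> \<le> n * 2 ^ n" using n1 by simp
      finally show ?thesis using card_horn_bounds(1)[of n] unfolding N_def by linarith
    qed
    then have le: "real (2 ^ R - 1) \<le> real N" by (simp only: of_nat_le_iff)
    have y01: "0 \<le> y" "y \<le> 1" unfolding y_def using le Npos by (auto simp: divide_le_eq_1)
    have yl: "y \<ge> 1 / (2 * 2^n)"
    proof -
      have nR': "real n \<le> real (2 ^ R - 1)" using nR by (simp only: of_nat_le_iff)
      have "real n / ((real n + 1) * 2^n) \<le> real (2 ^ R - 1) / real N"
        using nR' Nup Npos by (intro frac_le) auto
      moreover have "1 / (2 * 2^n) \<le> real n / ((real n + 1) * 2^n)"
      proof -
        have h: "1/2 \<le> real n / (real n + 1)" using n1 by (simp add: field_simps)
        have "(1/2) / 2^n \<le> (real n / (real n + 1)) / 2^n" by (rule divide_right_mono[OF h]) simp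
        then show ?thesis unfolding divide_divide_eq_left by simp
      qed
      ultimately show ?thesis unfolding y_def by linarith
    qed
    have bl2: "real b \<ge> c * 2^n / 4"
    proof -
      have "real b \<ge> real m / 2 - 1" unfolding b_def using real_div_ge[of 2 m] by simp
      moreover have "c * 2^n \<ge> 6" using key n32 by linarith
      ultimately show ?thesis using mge by linarith
    qed
    have "c / 8 = 1 / (2 * 2^n) * (c * 2^n / 4)" by (simp add: field_simps)
    also have "\<dots> \<le> y * real b" using yl bl2 c y01 by (intro mult_mono) auto
    finally have "c / 8 \<le> y * real b" .
    then show ?thesis unfolding y_def by (rule one_minus_pow_ge[OF y01[unfolded y_def]])
  qed
  have e8: "0 \<le> 1 - exp (- (c / 8))" using c by simp
  have "(1 - exp (- (c / 8))) * \<delta>0 * real (card (LL (horn_clauses n) m))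
      \<le> (1 - exp (- (c / 8))) * ((\<Prod>j<R. 1 - (1 - real ((n - j) * 2 ^ j) / real N) ^ bl j) * real (card (LL (horn_clauses n) m)))"
    using prodge e8 by (simp add: mult.assoc mult_left_mono mult_right_mono)
  also have "\<dots> \<le> (1 - exp (- (c / 8))) * real (card {zs\<in>LL (horn_clauses n) m. card (st bl R zs) = R})"
    using good_prod[OF n1 offR] e8 unfolding N_def by (intro mult_left_mono) auto
  also have "\<dots> \<le> (1 - (1 - real (2 ^ R - 1) / real N) ^ b) * real (card {zs\<in>LL (horn_clauses n) m. card (st bl R zs) = R})"
    using lastf by (intro mult_right_mono) auto
  also have "\<dots> \<le> real (card {zs\<in>LL (horn_clauses n) m. \<not> satisfiable zs})"
    using last_stage[OF n1 offb Rf(5)] unfolding N_def .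
  finally show ?thesis unfolding m_def .
qed


lemma PUR_sound_list:
  assumes "set \<Phi> \<subseteq> horn_clauses n" "\<not> satisfiable \<Phi>" "(b, y) \<in> set_pmf (PUR (set \<Phi>))"
  shows "\<not> b"
proof
  assume b: b
  have "\<exists>a. \<forall>C\<in>set \<Phi>. clause_sat a C"
  proof (rule pur_sound)
    show "finite (set \<Phi>)" by simp
    show "\<forall>C\<in>set \<Phi>. finite (snd C)" using assms(1) horn_snd_finite by blast
    show "(None, {}) \<notin> set \<Phi>" using assms(1) horn_nonempty by blast
    show "card (vars (set \<Phi>)) < Suc (card (vars (set \<Phi>)))" by simp
    show "(True, y) \<in> set_pmf (pur_fuel (Suc (card (vars (set \<Phi>)))) (set \<Phi>))"
      using assms(3) b by (simp add: PUR_def)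
  qed
  then show False using assms(2) by (simp add: satisfiable_def)
qed

lemma prob_unsat:
  assumes n: "n \<ge> 1"
  shows "measure_pmf.prob (PUR_on_Omega n m) {(\<Phi>, r). \<not> satisfiable \<Phi>}
    = real (card {\<Phi>\<in>LL (horn_clauses n) m. \<not> satisfiable \<Phi>}) / real (card (LL (horn_clauses n) m))"
proof -
  have "(\<Sum>\<Phi>\<in>LL (horn_clauses n) m. measure_pmf.prob (PUR (set \<Phi>)) {r. (\<Phi>, r) \<in> {(\<Phi>, r). \<not> satisfiable \<Phi>}})
      = (\<Sum>\<Phi>\<in>LL (horn_clauses n) m. if \<not> satisfiable \<Phi> then 1 else 0)"
    by (intro sum.cong refl) auto
  also have "\<dots> = real (card {\<Phi>\<in>LL (horn_clauses n) m. \<not> satisfiable \<Phi>})"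
    by (simp add: sum.If_cases finite_LL finite_horn Int_def)
  finally show ?thesis using prob_PUR_on_Omega[OF n, of m "{(\<Phi>, r). \<not> satisfiable \<Phi>}"] by simp
qed

lemma prob_E_bound:
  fixes c :: real
  assumes c: "c > 0" and n: "n \<ge> 1"
  shows "measure_pmf.prob (PUR_on_Omega n (nat \<lfloor>c * 2^n\<rfloor>))
      {(\<Phi>, b, y). \<not> satisfiable \<Phi> \<and> \<not> (int y > \<lfloor>log 2 (real n)\<rfloor> + k)} \<le> 2 * c * 2 powr (real_of_int k)"
proof -
  define m where "m = nat \<lfloor>c * 2^n\<rfloor>"
  define l where "l = \<lfloor>log 2 (real n)\<rfloor>"
  let ?H = "horn_clauses n"
  let ?E = "{(\<Phi>, b, y). \<not> satisfiable \<Phi> \<and> \<not> (int y > l + k)}"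
  have Npos: "real (card ?H) > 0" using card_horn_pos[OF n] by simp
  have LLc: "real (card (LL ?H m)) = real (card ?H) ^ m" using card_LL[OF finite_horn] by simp
  have pk: "0 \<le> 2 * c * 2 powr (real_of_int k)" using c by simp
  have "measure_pmf.prob (PUR_on_Omega n m) ?E \<le> 2 * c * 2 powr (real_of_int k)"
  proof (cases "l + k < 0")
    case True
    have E0: "?E = {}" using True by auto
    show ?thesis using pk by (simp only: E0 measure_empty)
  next
    case False
    define t where "t = nat (l + k)"
    have t: "int t = l + k" using False by (simp add: t_def)
    have each: "measure_pmf.prob (PUR (set \<Phi>)) {r. (\<Phi>, r) \<in> ?E}
        \<le> measure_pmf.prob (PUR (set \<Phi>)) {(b,y). \<not> b \<and> y \<le> t}" if "\<Phi> \<in> LL ?H m" for \<Phi>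
    proof (cases "satisfiable \<Phi>")
      case True
      then show ?thesis by simp
    next
      case False
      have "measure_pmf.prob (PUR (set \<Phi>)) {r. (\<Phi>, r) \<in> ?E}
          = measure_pmf.prob (PUR (set \<Phi>)) ({r. (\<Phi>, r) \<in> ?E} \<inter> set_pmf (PUR (set \<Phi>)))"
        by (rule measure_Int_set_pmf[symmetric])
      also have "\<dots> \<le> measure_pmf.prob (PUR (set \<Phi>)) {(b,y). \<not> b \<and> y \<le> t}"
      proof (rule measure_pmf.finite_measure_mono)
        show "{r. (\<Phi>, r) \<in> ?E} \<inter> set_pmf (PUR (set \<Phi>)) \<subseteq> {(b,y). \<not> b \<and> y \<le> t}"
        proof
          fix r assume r: "r \<in> {r. (\<Phi>, r) \<in> ?E} \<inter> set_pmf (PUR (set \<Phi>))"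
          obtain b y where rby: "r = (b, y)" by (cases r)
          have "\<not> b" using PUR_sound_list[of \<Phi> n b y] that False r by (auto simp: LL_def rby)
          moreover have "y \<le> t" using r t by (auto simp: rby)
          ultimately show "r \<in> {(b,y). \<not> b \<and> y \<le> t}" by (simp add: rby)
        qed
      qed simp
      finally show ?thesis .
    qed
    have "measure_pmf.prob (PUR_on_Omega n m) ?E
        = (\<Sum>\<Phi>\<in>LL ?H m. measure_pmf.prob (PUR (set \<Phi>)) {r. (\<Phi>, r) \<in> ?E}) / card (LL ?H m)"
      by (rule prob_PUR_on_Omega[OF n])
    also have "\<dots> \<le> (\<Sum>\<Phi>\<in>LL ?H m. measure_pmf.prob (PUR (set \<Phi>)) {(b,y). \<not> b \<and> y \<le> t}) / card (LL ?H m)"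
      using each by (intro divide_right_mono sum_mono) auto
    also have "\<dots> \<le> (m * (2 ^ Suc t * real (card ?H) ^ m / card ?H)) / card (LL ?H m)"
      by (intro divide_right_mono numer_total[OF n]) simp
    also have "\<dots> = real m * 2 ^ Suc t / card ?H"
      using Npos unfolding LLc by (simp add: field_simps)
    also have "\<dots> \<le> 2 * c * 2 powr (real_of_int k)"
    proof -
      have mle: "real m \<le> c * 2^n"
      proof -
        have "c * 2^n \<ge> 0" using c by simp
        then have "real m = of_int \<lfloor>c * 2^n\<rfloor>" unfolding m_def by simp
        then show ?thesis by linarith
      qed
      have Nge: "real n * 2^n \<le> real (card ?H)"
      proof -
        have "real (n * 2^n) \<le> real (card ?H)" using card_horn_bounds(1)[of n] by (simp only: of_nat_le_iff)
        then show ?thesis by simp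
      qed
      have "(2::real) ^ t = 2 powr (real t)" by (simp add: powr_realpow)
      also have "real t = real_of_int (l + k)" using t by (metis of_int_of_nat_eq)
      also have "2 powr real_of_int (l + k) \<le> 2 powr (log 2 (real n) + real_of_int k)"
        unfolding l_def by (intro powr_mono) auto
      also have "\<dots> = real n * 2 powr (real_of_int k)"
        using n by (simp add: powr_add)
      finally have tk: "(2::real) ^ t \<le> real n * 2 powr (real_of_int k)" .
      have "real m * 2 ^ Suc t / card ?H \<le> (c * 2^n) * (2 * (real n * 2 powr (real_of_int k))) / (real n * 2^n)"
      proof (rule frac_le)
        show "0 \<le> (c * 2^n) * (2 * (real n * 2 powr (real_of_int k)))" using c by simp
        show "real m * 2 ^ Suc t \<le> (c * 2^n) * (2 * (real n * 2 powr (real_of_int k)))"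
          using mle tk by (intro mult_mono) auto
        show "0 < real n * 2^n" using n by simp
        show "real n * 2^n \<le> real (card ?H)" by (rule Nge)
      qed
      also have "\<dots> = 2 * c * 2 powr (real_of_int k)" using n by (simp add: field_simps)
      finally show ?thesis .
    qed
    finally show ?thesis .
  qed
  then show ?thesis unfolding m_def l_def .
qed

lemma denom_bound:
  fixes c :: real
  assumes c: "c > 0"
  shows "\<exists>\<delta>>0. \<exists>n0\<ge>1. \<forall>n\<ge>n0. measure_pmf.prob (PUR_on_Omega n (nat \<lfloor>c * 2^n\<rfloor>)) {(\<Phi>, r). \<not> satisfiable \<Phi>} \<ge> \<delta>"
proof -
  define x where "x j = exp (- (c * 2^j / (16 * (real j + 1)^2)))" for j :: nat
  have x01: "0 \<le> x j \<and> x j < 1" for j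
  proof -
    have "c * 2^j / (16 * (real j + 1)^2) > 0" using c by simp
    then show ?thesis by (simp add: x_def)
  qed
  obtain \<delta>0 where d0: "\<delta>0 > 0" "\<forall>R. (\<Prod>j<R. 1 - x j) \<ge> \<delta>0"
    using prod_lower_uniform[OF x01 ev_x[OF c, folded x_def]] by blast
  obtain n1 where n1: "\<forall>n\<ge>n1. 1 + 32 * real n < c * 2^n / 2" using ev_n[OF c] by blast
  define \<delta> where "\<delta> = (1 - exp (- (c / 8))) * \<delta>0"
  have dpos: "\<delta> > 0" unfolding \<delta>_def using c d0 by simp
  show ?thesis
  proof (intro exI[of _ \<delta>] conjI exI[of _ "max n1 32"] allI impI dpos)
    show "max n1 32 \<ge> (1::nat)" by simp
    fix n assume "n \<ge> max n1 32"
    then have n32: "n \<ge> 32" and key: "1 + 32 * real n < c * 2^n / 2" using n1 by auto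
    have nn: "n \<ge> 1" using n32 by simp
    have "\<delta> * real (card (LL (horn_clauses n) (nat \<lfloor>c * 2^n\<rfloor>)))
       \<le> real (card {zs\<in>LL (horn_clauses n) (nat \<lfloor>c * 2^n\<rfloor>). \<not> satisfiable zs})"
      using denom_at_n[OF c n32 key d0(2)[unfolded x_def]] unfolding \<delta>_def by simp
    moreover have "real (card (LL (horn_clauses n) (nat \<lfloor>c * 2^n\<rfloor>))) > 0"
      using LL_nonempty[OF nn] finite_LL[OF finite_horn] by (simp add: card_gt_0_iff)
    ultimately show "\<delta> \<le> measure_pmf.prob (PUR_on_Omega n (nat \<lfloor>c * 2^n\<rfloor>)) {(\<Phi>, r). \<not> satisfiable \<Phi>}"
      unfolding prob_unsat[OF nn] by (simp add: field_simps)
  qed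
qed


theorem mainTheorem11:
  fixes c :: real
  assumes "c > 0"
  shows "((\<lambda>k::int. liminf (\<lambda>n. ereal (cond_prob_iter c n k))) \<longlongrightarrow> ereal 1) at_bot"
proof -
  obtain \<delta> n0 where d: "\<delta> > 0" "n0 \<ge> 1"
    and dn: "\<And>n. n \<ge> n0 \<Longrightarrow> measure_pmf.prob (PUR_on_Omega n (nat \<lfloor>c * 2^n\<rfloor>)) {(\<Phi>, r). \<not> satisfiable \<Phi>} \<ge> \<delta>"
    using denom_bound[OF assms] by blast
  have upper: "cond_prob_iter c n k \<le> 1" for n k
  proof -
    define D where "D = PUR_on_Omega n (nat \<lfloor>c * 2 ^ n\<rfloor>)"
    have "measure_pmf.prob D {(\<Phi>, b, y). \<not> satisfiable \<Phi> \<and> int y > \<lfloor>log 2 (real n)\<rfloor> + k}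
        \<le> measure_pmf.prob D {(\<Phi>, r). \<not> satisfiable \<Phi>}"
      by (rule measure_pmf.finite_measure_mono) auto
    then have le: "measure_pmf.prob D {(\<Phi>, b, y). \<not> satisfiable \<Phi> \<and> int y > \<lfloor>log 2 (real n)\<rfloor> + k}
        \<le> measure_pmf.prob D {(\<Phi>, r). \<not> satisfiable \<Phi>}" .
    have nn: "0 \<le> measure_pmf.prob D {(\<Phi>, r). \<not> satisfiable \<Phi>}" by (rule measure_nonneg)
    have "measure_pmf.prob D {(\<Phi>, b, y). \<not> satisfiable \<Phi> \<and> int y > \<lfloor>log 2 (real n)\<rfloor> + k}
        / measure_pmf.prob D {(\<Phi>, r). \<not> satisfiable \<Phi>} \<le> 1"
    proof (cases "measure_pmf.prob D {(\<Phi>, r). \<not> satisfiable \<Phi>} = 0")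
      case False
      then have "0 < measure_pmf.prob D {(\<Phi>, r). \<not> satisfiable \<Phi>}" using nn by linarith
      then show ?thesis using le by (simp only: divide_le_eq_1_pos)
    qed simp
    then show ?thesis unfolding cond_prob_iter_def Let_def D_def[symmetric] .
  qed
  have lower: "cond_prob_iter c n k \<ge> 1 - 2 * c * 2 powr (real_of_int k) / \<delta>" if n: "n \<ge> n0" for n k
  proof -
    define D where "D = PUR_on_Omega n (nat \<lfloor>c * 2 ^ n\<rfloor>)"
    define l where "l = \<lfloor>log 2 (real n)\<rfloor>"
    let ?U = "{(\<Phi>, r). \<not> satisfiable \<Phi>} :: (clause list \<times> bool \<times> nat) set"
    let ?E = "{(\<Phi>, b, y). \<not> satisfiable \<Phi> \<and> \<not> (int y > l + k)} :: (clause list \<times> bool \<times> nat) set"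
    have Dd: "measure_pmf.prob D ?U \<ge> \<delta>" using dn[OF n] by (simp add: D_def)
    have Eb: "measure_pmf.prob D ?E \<le> 2 * c * 2 powr (real_of_int k)"
      unfolding D_def l_def by (rule prob_E_bound[OF assms]) (use n d in simp)
    have eq: "{(\<Phi>, b, y). \<not> satisfiable \<Phi> \<and> int y > l + k} = ?U - ?E" by auto
    have num: "measure_pmf.prob D {(\<Phi>, b, y). \<not> satisfiable \<Phi> \<and> int y > l + k}
        = measure_pmf.prob D ?U - measure_pmf.prob D ?E"
      unfolding eq by (rule measure_pmf.finite_measure_Diff) auto
    have Upos: "measure_pmf.prob D ?U > 0" using Dd d by linarith
    have "cond_prob_iter c n k = (measure_pmf.prob D ?U - measure_pmf.prob D ?E) / measure_pmf.prob D ?U"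
      unfolding cond_prob_iter_def Let_def D_def[symmetric] l_def[symmetric] num ..
    also have "\<dots> = 1 - measure_pmf.prob D ?E / measure_pmf.prob D ?U"
      using Upos by (simp add: field_simps)
    finally have eq1: "cond_prob_iter c n k = 1 - measure_pmf.prob D ?E / measure_pmf.prob D ?U" .
    have "measure_pmf.prob D ?E / measure_pmf.prob D ?U \<le> 2 * c * 2 powr (real_of_int k) / \<delta>"
    proof (rule frac_le)
      show "0 \<le> 2 * c * 2 powr (real_of_int k)" using assms by simp
    qed (use Eb Dd d in auto)
    then show ?thesis using eq1 by linarith
  qed
  define f where "f k = ereal (1 - 2 * c * 2 powr (real_of_int k) / \<delta>)" for k :: int
  show ?thesis
  proof (rule tendsto_sandwich[of f _ _ "\<lambda>_. ereal 1"])
    show "\<forall>\<^sub>F k in at_bot. f k \<le> liminf (\<lambda>n. ereal (cond_prob_iter c n k))"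
    proof (intro always_eventually allI)
      fix k
      show "f k \<le> liminf (\<lambda>n. ereal (cond_prob_iter c n k))"
        unfolding f_def
        by (rule Liminf_bounded) (use lower in \<open>auto simp: eventually_at_top_linorder intro!: exI[of _ n0]\<close>)
    qed
    show "\<forall>\<^sub>F k in at_bot. liminf (\<lambda>n. ereal (cond_prob_iter c n k)) \<le> ereal 1"
    proof (intro always_eventually allI)
      fix k
      show "liminf (\<lambda>n. ereal (cond_prob_iter c n k)) \<le> ereal 1"
        by (rule Liminf_le) (use upper in auto)
    qed
    show "((\<lambda>_. ereal 1) \<longlongrightarrow> ereal 1) at_bot" by simp
    have p0: "((\<lambda>x::real. 2 powr x) \<longlongrightarrow> 0) at_bot" by real_asymp
    have "((\<lambda>k::int. 2 powr (real_of_int k)) \<longlongrightarrow> 0) at_bot"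
      by (rule filterlim_compose[OF p0 filterlim_real_of_int_at_bot])
    then have "((\<lambda>k::int. 1 - 2 * c * 2 powr (real_of_int k) / \<delta>) \<longlongrightarrow> 1 - 2 * c * 0 / \<delta>) at_bot"
      using d by (intro tendsto_intros) auto
    then show "(f \<longlongrightarrow> ereal 1) at_bot" unfolding f_def by simp
  qed
qed

end
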